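(* Let $A$ be a set and let $\iota:T(T_{\ge1}(A))\to H_{\mathcal S}(A)$ be the algebra morphism sending each nonempty word $w=a_1\cdots a_n$ to $\iota(w)=\sum_{T}T\otimes a_1\cdots a_n$, the sum over all reduced plane trees $T$ with $n+1$ leaves, decorated by $a_1,\dots,a_n$ from left to right. Then (i) $\iota$ is a coalgebra morphism: $\Delta\circ\iota=(\iota\otimes\iota)\circ\Delta$; (ii) $\iota$ is a codendriform morphism: for every nonempty word $w$, $(\iota\otimes\iota)\circ\Delta_{\prec}(w)=\Delta_{\prec}\circ\iota(w)$.
   Context: $T(T_{\ge1}(A))$ is the free associative algebra over $\mathbb{C}$ on the nonempty words over $A$; its elements are linear combinations of segmented words $w_1|\cdots|w_s$ (the product being the bar concatenation, the empty segmented word being the unit $1$). For a word $w=a_1\cdots a_n$ and $S=\{i_1<\dots<i_k\}\subseteq\{1,\dots,n\}$, put $R^S(w)=a_{i_1}\cdots a_{i_k}$ ($=1$ if $S=\emptyset$) and $P^S(w)=a_{J_1}|\cdots|a_{J_l}$, where $J_1,\dots,J_l$ are the maximal intervals of $\{1,\dots,n\}\setminus S$ in increasing order and $a_J$ is the subword of letters with indices in $J$ ($P^S(w)=1$ if $S=\{1,\dots,n\}$). The coproduct is $\Delta(w)=\sum_{S}R^S(w)\otimes P^S(w)$, extended multiplicatively, and $\Delta^+_{\prec}(w)=\sum_{S\ni n}R^S(w)\otimes P^S(w)$; $\Delta_{\prec}(w)=\Delta^+_{\prec}(w)-w\otimes1$. A reduced plane tree is a rooted plane tree in which every internal node has at least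 two children; its weight is its number of leaves minus 1. For a tree with leaves $\ell_1,\dots,\ell_{n+1}$, the $i$th sector is seen by the lowest common ancestor of $\ell_i,\ell_{i+1}$. $H_{\mathcal S}(A)$ has basis the finite products (concatenations) of $A$-decorated trees $T\otimes a_1\cdots a_n$ (a tree of weight $n\ge1$ with sectors labeled left to right by $a_1,\dots,a_n$), unit $1$ the empty product. An admissible cut of $T$ is a (possibly empty) set $c$ of internal vertices with at most one vertex on each root-to-leaf path; $P^c(T)$ is the left-to-right product of the subtrees rooted at vertices of $c$, each decorated by the letters of the sectors seen by its vertices (in order), and $R^c(T)$ is $T$ with these subtrees replaced by leaves, decorated by the letters of the sectors seen by its remaining internal vertices. $\Delta(T\otimes w)=\sum_cR^c(T)\otimes P^c(T)$, extended multiplicatively; $\Delta^+_{\prec}(T\otimes w)$ is the same sum restricted to cuts for which the rightmost leaf of $T$ stays in $R^c(T)$, and for $x$ a linear combination of decorated trees, $\Delta_{\prec}(x)=\Delta^+_{\prec}(x)-x\otimes1$. *)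

theory Defs
  imports Complex_Main "HOL-Library.Sublist"
begin

text \<open>An element of the free vector space on a basis 'b is a function 'b => complex
  (of finite support). Linear extension of a map given on basis elements:\<close>
definition lin :: "('b \<Rightarrow> 'c \<Rightarrow> complex) \<Rightarrow> ('b \<Rightarrow> complex) \<Rightarrow> 'c \<Rightarrow> complex" where
  "lin f x = (\<lambda>c. \<Sum>b\<in>{b. x b \<noteq> 0}. x b * f b c)"

text \<open>Free monoid algebras: basis = lists, product induced by concatenation.\<close>
definition vmult :: "('b list \<Rightarrow> complex) \<Rightarrow> ('b list \<Rightarrow> complex) \<Rightarrow> 'b list \<Rightarrow> complex" where
  "vmult x y = (\<lambda>c. \<Sum>i\<le>length c. x (take i c) * y (drop i c))"

definition vone :: "'b list \<Rightarrow> complex" where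
  "vone = (\<lambda>c. if c = [] then 1 else 0)"

text \<open>Tensor square of such an algebra: basis = pairs of lists, componentwise product.\<close>
definition tmult :: "('b list \<times> 'c list \<Rightarrow> complex) \<Rightarrow> ('b list \<times> 'c list \<Rightarrow> complex)
    \<Rightarrow> 'b list \<times> 'c list \<Rightarrow> complex" where
  "tmult x y = (\<lambda>(c, d). \<Sum>i\<le>length c. \<Sum>j\<le>length d.
       x (take i c, take j d) * y (drop i c, drop j d))"

definition tone :: "'b list \<times> 'c list \<Rightarrow> complex" where
  "tone = (\<lambda>(c, d). if c = [] \<and> d = [] then 1 else 0)"

definition tens1 :: "('b list \<Rightarrow> complex) \<Rightarrow> 'b list \<times> 'c list \<Rightarrow> complex" where
  "tens1 x = (\<lambda>(p, q). x p * vone q)"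

text \<open>Basis: segmented words w1|...|ws, represented as lists of nonempty words.
  Indices of letters are 0-based.\<close>

fun cutw :: "nat set \<Rightarrow> nat \<Rightarrow> 'a list \<Rightarrow> 'a list list" where
  "cutw S i [] = [[]]"
| "cutw S i (a # w) = (if i \<in> S then [] # cutw S (Suc i) w
      else (case cutw S (Suc i) w of [] \<Rightarrow> [[a]] | r # rs \<Rightarrow> (a # r) # rs))"

text \<open>P^S(w): the maximal intervals of the complement of S, in increasing order.\<close>
definition Pw :: "nat set \<Rightarrow> 'a list \<Rightarrow> 'a list list" where
  "Pw S w = filter (\<lambda>u. u \<noteq> []) (cutw S 0 w)"

text \<open>R^S(w) as an element of T(T_{>=1}(A)) (the empty word being the unit).\<close>
definition Rw :: "nat set \<Rightarrow> 'a list \<Rightarrow> 'a list list" where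
  "Rw S w = (let u = nths w S in if u = [] then [] else [u])"

definition DW :: "'a list \<Rightarrow> 'a list list \<times> 'a list list \<Rightarrow> complex" where
  "DW w = (\<lambda>pq. of_nat (card {S. S \<subseteq> {..<length w} \<and> (Rw S w, Pw S w) = pq}))"

definition DWplus :: "'a list \<Rightarrow> 'a list list \<times> 'a list list \<Rightarrow> complex" where
  "DWplus w = (\<lambda>pq. of_nat (card {S. S \<subseteq> {..<length w} \<and> length w - 1 \<in> S
                                     \<and> (Rw S w, Pw S w) = pq}))"

definition DWprec :: "'a list \<Rightarrow> 'a list list \<times> 'a list list \<Rightarrow> complex" where
  "DWprec w = (\<lambda>pq. DWplus w pq - tens1 (\<lambda>b. if b = [w] then 1 else 0) pq)"

definition DT :: "'a list list \<Rightarrow> 'a list list \<times> 'a list list \<Rightarrow> complex" where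
  "DT ws = foldr (\<lambda>w acc. tmult (DW w) acc) ws tone"

datatype ptree = Nd "ptree list"   \<comment> \<open>a leaf is Nd []\<close>

fun leaves :: "ptree \<Rightarrow> nat" where
  "leaves (Nd ts) = (if ts = [] then 1 else sum_list (map leaves ts))"

fun reduced :: "ptree \<Rightarrow> bool" where
  "reduced (Nd ts) = ((ts = [] \<or> 2 \<le> length ts) \<and> (\<forall>t\<in>set ts. reduced t))"

text \<open>Plane trees whose internal vertices carry the letters of the sectors they see:
  a vertex with k children sees k-1 sectors (between consecutive children).\<close>
datatype 'a stree = SN "'a stree list" "'a list"

fun shape :: "'a stree \<Rightarrow> ptree" where
  "shape (SN ts l) = Nd (map shape ts)"

fun swf :: "'a stree \<Rightarrow> bool" where
  "swf (SN ts l) = (length l = length ts - 1 \<and> (\<forall>t\<in>set ts. swf t))"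

fun ilv :: "'a list list \<Rightarrow> 'a list \<Rightarrow> 'a list" where
  "ilv [] l = []"
| "ilv [r] l = r"
| "ilv (r # rs) (a # l) = r @ a # ilv rs l"
| "ilv (r # rs) [] = r @ concat rs"

text \<open>Left-to-right reading of the sector letters.\<close>
fun reading :: "'a stree \<Rightarrow> 'a list" where
  "reading (SN ts l) = ilv (map reading ts) l"

text \<open>Vertices are addressed by paths of child indices.\<close>
fun sub :: "'a stree \<Rightarrow> nat list \<Rightarrow> 'a stree option" where
  "sub s [] = Some s"
| "sub (SN ts l) (i # p) = (if i < length ts then sub (ts ! i) p else None)"

definition internalv :: "'a stree \<Rightarrow> nat list set" where
  "internalv s = {p. \<exists>ts l. sub s p = Some (SN ts l) \<and> ts \<noteq> []}"

definition leafv :: "'a stree \<Rightarrow> nat list set" where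
  "leafv s = {p. \<exists>l. sub s p = Some (SN [] l)}"

text \<open>Admissible cut: set of internal vertices with at most one vertex on each
  root-to-leaf path (the path to leaf p consists of the prefixes of p).\<close>
definition adm :: "'a stree \<Rightarrow> nat list set \<Rightarrow> bool" where
  "adm s c = (c \<subseteq> internalv s \<and> (\<forall>q\<in>leafv s. card {p\<in>c. prefix p q} \<le> 1))"

text \<open>R^c: replace the subtrees rooted at vertices of c by leaves.\<close>
function cutR :: "nat list set \<Rightarrow> 'a stree \<Rightarrow> 'a stree" where
  "cutR c (SN ts l) = (if [] \<in> c then SN [] []
     else SN (map (\<lambda>(i, t). cutR {p. i # p \<in> c} t) (zip [0..<length ts] ts)) l)"
  by pat_completeness auto
termination
  by (relation "measure (\<lambda>(c, s). size s)")
     (auto dest!: set_zip_rightD intro: le_imp_less_Suc trans_le_add1 size_list_estimation')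

text \<open>P^c: the subtrees rooted at vertices of c, from left to right.\<close>
function cutP :: "nat list set \<Rightarrow> 'a stree \<Rightarrow> 'a stree list" where
  "cutP c (SN ts l) = (if [] \<in> c then [SN ts l]
     else concat (map (\<lambda>(i, t). cutP {p. i # p \<in> c} t) (zip [0..<length ts] ts)))"
  by pat_completeness auto
termination
  by (relation "measure (\<lambda>(c, s). size s)")
     (auto dest!: set_zip_rightD intro: le_imp_less_Suc trans_le_add1 size_list_estimation')

fun on_right :: "'a stree \<Rightarrow> nat list \<Rightarrow> bool" where
  "on_right s [] = True"
| "on_right (SN ts l) (i # p) = (ts \<noteq> [] \<and> i = length ts - 1 \<and> on_right (ts ! i) p)"

text \<open>A decorated tree T \<otimes> a1...an is the pair (T, a1...an).  The basis of H_S(A)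
  consists of lists (products) of such pairs; the empty list is the unit.\<close>
type_synonym 'a dtree = "ptree \<times> 'a list"

definition dec :: "'a stree \<Rightarrow> 'a dtree" where
  "dec s = (shape s, reading s)"

text \<open>A decorated tree as basis element of H_S(A); the tree of weight 0 (a leaf) is 1.\<close>
definition tob :: "'a stree \<Rightarrow> 'a dtree list" where
  "tob s = (if shape s = Nd [] then [] else [dec s])"

definition DHtree :: "'a dtree \<Rightarrow> 'a dtree list \<times> 'a dtree list \<Rightarrow> complex" where
  "DHtree Tw = (\<lambda>pq. of_nat (card {(s, c). swf s \<and> dec s = Tw \<and> adm s c
        \<and> (tob (cutR c s), map dec (cutP c s)) = pq}))"

definition DHplustree :: "'a dtree \<Rightarrow> 'a dtree list \<times> 'a dtree list \<Rightarrow> complex" where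
  "DHplustree Tw = (\<lambda>pq. of_nat (card {(s, c). swf s \<and> dec s = Tw \<and> adm s c
        \<and> (\<forall>p\<in>c. \<forall>q\<in>leafv s. on_right s q \<longrightarrow> \<not> prefix p q)
        \<and> (tob (cutR c s), map dec (cutP c s)) = pq}))"

definition DH :: "'a dtree list \<Rightarrow> 'a dtree list \<times> 'a dtree list \<Rightarrow> complex" where
  "DH h = foldr (\<lambda>t acc. tmult (DHtree t) acc) h tone"

text \<open>Delta^+_< on single decorated trees (only applied to linear combinations of trees).\<close>
definition DHplus1 :: "'a dtree list \<Rightarrow> 'a dtree list \<times> 'a dtree list \<Rightarrow> complex" where
  "DHplus1 h = (case h of [t] \<Rightarrow> DHplustree t | _ \<Rightarrow> (\<lambda>_. 0))"

definition DHprec :: "('a dtree list \<Rightarrow> complex) \<Rightarrow> 'a dtree list \<times> 'a dtree list \<Rightarrow> complex" where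
  "DHprec x = (\<lambda>pq. lin DHplus1 x pq - tens1 x pq)"

definition iota_word :: "'a list \<Rightarrow> 'a dtree list \<Rightarrow> complex" where
  "iota_word w = (\<lambda>h. if \<exists>T. h = [(T, w)] \<and> reduced T \<and> leaves T = length w + 1 then 1 else 0)"

definition iota :: "'a list list \<Rightarrow> 'a dtree list \<Rightarrow> complex" where
  "iota ws = foldr (\<lambda>w acc. vmult (iota_word w) acc) ws vone"

definition iota2 :: "'a list list \<times> 'a list list \<Rightarrow> 'a dtree list \<times> 'a dtree list \<Rightarrow> complex" where
  "iota2 = (\<lambda>(u, v). \<lambda>(p, q). iota u p * iota v q)"

end

theory Submission
  imports Defs
begin

definition cc :: "nat list set \<Rightarrow> nat \<Rightarrow> nat list set" where
  "cc c i = {p. i # p \<in> c}"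
lemma zip_idx: "map (\<lambda>(i,t). f i t) (zip [0..<length ts] ts) = map (\<lambda>i. f i (ts!i)) [0..<length ts]"
  by (rule nth_equalityI) auto
lemma cutR_simp: "cutR c (SN ts l) = (if [] \<in> c then SN [] [] else SN (map (\<lambda>i. cutR (cc c i) (ts!i)) [0..<length ts]) l)"
  apply (subst cutR.simps)
  using zip_idx[where f="\<lambda>i t. cutR {p. i # p \<in> c} t" and ts=ts] by (simp only: cc_def split: if_split)
lemma cutP_simp: "cutP c (SN ts l) = (if [] \<in> c then [SN ts l] else concat (map (\<lambda>i. cutP (cc c i) (ts!i)) [0..<length ts]))"
  apply (subst cutP.simps)
  using zip_idx[where f="\<lambda>i t. cutP {p. i # p \<in> c} t" and ts=ts] by (simp only: cc_def split: if_split)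

declare cutR.simps[simp del] cutP.simps[simp del]

fun nlv :: "'a stree \<Rightarrow> nat" where
  "nlv (SN ts l) = (if ts = [] then 1 else sum_list (map nlv ts))"

fun isleaf :: "'a stree \<Rightarrow> bool" where
  "isleaf (SN ts l) = (ts = [])"

fun chunks :: "nat list \<Rightarrow> 'b list \<Rightarrow> 'b list list" where
  "chunks [] xs = []"
| "chunks (k # ks) xs = take k xs # chunks ks (drop k xs)"

lemma size_nth_less: "i < length ts \<Longrightarrow> size (ts ! i) < Suc (size_list size ts + k)"
proof -
  assume "i < length ts"
  then have "size (ts ! i) \<le> size_list size ts" by (meson nth_mem size_list_estimation' order_refl)
  then show ?thesis by simp
qed

function graft :: "'a stree \<Rightarrow> 'a stree list \<Rightarrow> 'a stree" where
  "graft (SN ts l) gs = (if ts = [] then hd gs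
     else SN (map (\<lambda>i. graft (ts ! i) (chunks (map nlv ts) gs ! i)) [0..<length ts]) l)"
  by pat_completeness auto
termination
  by (relation "measure (\<lambda>(s, gs). size s)") (auto simp: size_nth_less)

function cutset :: "'a stree \<Rightarrow> 'a stree list \<Rightarrow> nat list set" where
  "cutset (SN ts l) gs = (if ts = [] then (if isleaf (hd gs) then {} else {[]})
     else (\<Union>i<length ts. Cons i ` cutset (ts ! i) (chunks (map nlv ts) gs ! i)))"
  by pat_completeness auto
termination
  by (relation "measure (\<lambda>(s, gs). size s)") (auto simp: size_nth_less)

function mk :: "'a stree \<Rightarrow> 'a stree list \<Rightarrow> ('a \<times> bool) list" where
  "mk (SN ts l) gs = (if ts = [] then map (\<lambda>a. (a, False)) (reading (hd gs))
     else ilv (map (\<lambda>i. mk (ts ! i) (chunks (map nlv ts) gs ! i)) [0..<length ts]) (map (\<lambda>a. (a, True)) l))"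
  by pat_completeness auto
termination
  by (relation "measure (\<lambda>(s, gs). size s)") (auto simp: size_nth_less)

function ecut :: "nat list set \<Rightarrow> 'a stree \<Rightarrow> 'a stree list" where
  "ecut c (SN ts l) = (if [] \<in> c then [SN ts l] else if ts = [] then [SN [] l]
     else concat (map (\<lambda>i. ecut (cc c i) (ts ! i)) [0..<length ts]))"
  by pat_completeness auto
termination
  by (relation "measure (\<lambda>(c, s). size s)") (auto simp: size_nth_less)

declare graft.simps[simp del] cutset.simps[simp del] mk.simps[simp del] ecut.simps[simp del]


lemma map_idx: "map f ts = map (\<lambda>i. f (ts ! i)) [0..<length ts]"
  by (rule nth_equalityI) auto

lemma reading_SN: "reading (SN ts l) = ilv (map (\<lambda>i. reading (ts!i)) [0..<length ts]) l"
  by (simp add: map_idx[of reading ts])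

lemma shape_SN: "shape (SN ts l) = Nd (map (\<lambda>i. shape (ts!i)) [0..<length ts])"
  by (simp add: map_idx[of shape ts])

lemma nlv_pos: "1 \<le> nlv s"
proof (induction s)
  case (SN ts l)
  show ?case
  proof (cases ts)
    case (Cons t ts')
    then have "1 \<le> nlv t" using SN by simp
    then show ?thesis using Cons by simp
  qed simp
qed

lemma leaves_shape: "leaves (shape s) = nlv s"
proof (induction s)
  case (SN ts l)
  then have "sum_list (map (leaves \<circ> shape) ts) = sum_list (map nlv ts)"
    by (metis (mono_tags, lifting) comp_apply map_eq_conv)
  then show ?case by simp
qed

lemma sum_list_map_Suc: "sum_list (map (\<lambda>x. f x + 1) xs) = sum_list (map f xs) + length xs"
  by (induction xs) auto

lemma len_Suc_split: "length rs = Suc (Suc n) \<Longrightarrow> \<exists>r r2 rs2. rs = r # r2 # rs2"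
  by (cases rs; cases "tl rs") auto

lemma ilv_len: "length rs = Suc (length l) \<Longrightarrow> length (ilv rs l) = sum_list (map length rs) + length l"
proof (induction l arbitrary: rs)
  case Nil then show ?case by (cases rs) auto
next
  case (Cons a l)
  then have "length rs = Suc (Suc (length l))" by simp
  then obtain r r2 rs2 where "rs = r # r2 # rs2" using len_Suc_split by blast
  with Cons show ?case by auto
qed

lemma ilv_Cons: "rs \<noteq> [] \<Longrightarrow> ilv (r # rs) (a # l) = r @ a # ilv rs l"
  by (cases rs) auto

lemma ilv_map: "length rs = Suc (length l) \<Longrightarrow> ilv (map (map f) rs) (map f l) = map f (ilv rs l)"
proof (induction l arbitrary: rs)
  case Nil then show ?case by (cases rs) auto
next
  case (Cons a l)
  then have "length rs = Suc (Suc (length l))" by simp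
  then obtain r r2 rs2 where "rs = r # r2 # rs2" using len_Suc_split by blast
  with Cons show ?case using Cons.IH[of "r2 # rs2"] by (auto simp: ilv_Cons)
qed

lemma ilv_filter: "length rs = Suc (length l) \<Longrightarrow> \<forall>x\<in>set l. P x \<Longrightarrow>
    filter P (ilv rs l) = ilv (map (filter P) rs) l"
proof (induction l arbitrary: rs)
  case Nil then show ?case by (cases rs) auto
next
  case (Cons a l)
  then have "length rs = Suc (Suc (length l))" by simp
  then obtain r r2 rs2 where "rs = r # r2 # rs2" using len_Suc_split by blast
  with Cons show ?case by (auto simp: ilv_Cons)
qed

lemma ilv_inj: "length rs = Suc (length l) \<Longrightarrow> length rs' = Suc (length l') \<Longrightarrow>
   map length rs = map length rs' \<Longrightarrow> ilv rs l = ilv rs' l' \<Longrightarrow> rs = rs' \<and> l = l'"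
proof (induction l arbitrary: rs rs' l')
  case Nil
  then obtain r where "rs = [r]" by (cases rs) auto
  moreover from Nil have "length rs' = length rs" by (metis length_map)
  ultimately obtain r' where "rs' = [r']" by (cases rs') auto
  with Nil \<open>rs = [r]\<close> show ?case by auto
next
  case (Cons a l)
  then have "length rs = Suc (Suc (length l))" by simp
  then obtain r r2 rs2 where rs: "rs = r # r2 # rs2" using len_Suc_split by blast
  from Cons have "length rs' = length rs" by (metis length_map)
  with rs have "length rs' = Suc (Suc (length rs2))" by simp
  then obtain r' r2' rs2' where rs': "rs' = r' # r2' # rs2'" using len_Suc_split by blast
  from Cons rs rs' obtain a' l1' where l': "l' = a' # l1'" by (cases l') auto
  from Cons rs rs' have lr: "length r = length r'" by auto
  from Cons(5) rs rs' l' have "r @ a # ilv (r2 # rs2) l = r' @ a' # ilv (r2' # rs2') l1'" by simp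
  with lr have "r = r'" "a = a'" "ilv (r2 # rs2) l = ilv (r2' # rs2') l1'" by auto
  moreover have "r2 # rs2 = r2' # rs2' \<and> l = l1'"
    using Cons.IH[of "r2 # rs2" "r2' # rs2'" l1'] Cons.prems rs rs' l' calculation by auto
  ultimately show ?case using rs rs' l' by auto
qed


lemma nlv_SN: "ts \<noteq> [] \<Longrightarrow> nlv (SN ts l) = (\<Sum>i<length ts. nlv (ts ! i))"
  by (simp add: sum_list_sum_nth atLeast0LessThan)

lemma reading_len: "swf s \<Longrightarrow> length (reading s) + 1 = nlv s"
proof (induction s)
  case (SN ts l)
  show ?case
  proof (cases "ts = []")
    case True with SN show ?thesis by simp
  next
    case False
    have "length (reading (SN ts l)) = sum_list (map length (map reading ts)) + length l"
      using SN.prems False by (simp add: ilv_len)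
    also have "map length (map reading ts) = map (\<lambda>t. nlv t - 1) ts"
    proof -
      have "\<And>t. t \<in> set ts \<Longrightarrow> length (reading t) = nlv t - 1" using SN by fastforce
      then show ?thesis by simp
    qed
    finally have "length (reading (SN ts l)) + 1 = sum_list (map (\<lambda>t. nlv t - 1) ts) + length ts"
      using SN.prems False by simp
    also have "\<dots> = sum_list (map (\<lambda>t. nlv t - 1 + 1) ts)" by (simp only: sum_list_map_Suc)
    also have "\<dots> = sum_list (map nlv ts)" using nlv_pos
      by (metis (no_types, lifting) le_add_diff_inverse2 map_eq_conv)
    finally show ?thesis using False by simp
  qed
qed

lemma nlv_ge2: "reduced (shape s) \<Longrightarrow> \<not> isleaf s \<Longrightarrow> 2 \<le> nlv s"
proof (cases s)
  case (SN ts l)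
  assume r: "reduced (shape s)" and nl: "\<not> isleaf s"
  from r nl SN have "2 \<le> length ts" by simp
  then obtain t1 t2 ts' where "ts = t1 # t2 # ts'"
    by (cases ts; cases "tl ts") auto
  moreover have "1 \<le> nlv t1" "1 \<le> nlv t2" using nlv_pos by auto
  ultimately show ?thesis using SN by simp
qed

definition wf :: "'a stree \<Rightarrow> bool" where "wf s = (swf s \<and> reduced (shape s))"

lemma wf_reading_nil: "wf s \<Longrightarrow> (reading s = []) = isleaf s"
proof -
  assume "wf s"
  then have "length (reading s) + 1 = nlv s" "reduced (shape s)" using reading_len wf_def by blast+
  moreover have "isleaf s \<Longrightarrow> nlv s = 1" by (cases s) auto
  ultimately show ?thesis using nlv_ge2 by fastforce
qed

lemma wf_leaf: "wf s \<Longrightarrow> isleaf s \<Longrightarrow> s = SN [] []"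
  by (cases s) (auto simp: wf_def)

lemma wf_SN: "wf (SN ts l) = (length l = length ts - 1 \<and> (ts = [] \<or> 2 \<le> length ts) \<and> (\<forall>t\<in>set ts. wf t))"
  by (auto simp: wf_def)

lemma wf_len: "wf s \<Longrightarrow> length (reading s) + 1 = nlv s"
  using reading_len wf_def by blast

lemma chunks_length[simp]: "length (chunks ks xs) = length ks"
  by (induction ks arbitrary: xs) auto

lemma concat_chunks: "concat (chunks ks xs) = take (sum_list ks) xs"
  by (induction ks arbitrary: xs) (auto simp: take_add)

lemma chunks_nth_length: "i < length ks \<Longrightarrow> sum_list ks \<le> length xs \<Longrightarrow> length (chunks ks xs ! i) = ks ! i"
proof (induction ks arbitrary: xs i)
  case (Cons k ks)
  show ?case
  proof (cases i)
    case 0 with Cons show ?thesis by simp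
  next
    case (Suc j) with Cons show ?thesis by simp
  qed
qed simp

lemma chunks_nth_set: "i < length ks \<Longrightarrow> set (chunks ks xs ! i) \<subseteq> set xs"
proof (induction ks arbitrary: xs i)
  case (Cons k ks)
  show ?case
  proof (cases i)
    case 0 with Cons show ?thesis by (auto dest: in_set_takeD)
  next
    case (Suc j) with Cons show ?thesis by (auto dest: in_set_dropD)
  qed
qed simp

lemma chunks_concat: "chunks (map length yss) (concat yss) = yss"
  by (induction yss) auto

lemma concat_map_chunks: "sum_list ks = length xs \<Longrightarrow> length ks = n \<Longrightarrow>
   concat (map (\<lambda>i. chunks ks xs ! i) [0..<n]) = xs"
proof -
  assume a: "sum_list ks = length xs" "length ks = n"
  have "map (\<lambda>i. chunks ks xs ! i) [0..<n] = chunks ks xs"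
    using a by (intro nth_equalityI) auto
  then show ?thesis using a by (simp add: concat_chunks)
qed

lemma sum_list_map_idx: "sum_list (map f ts) = sum_list (map (\<lambda>i. f (ts ! i)) [0..<length ts])"
  by (simp add: map_idx[of f ts])


lemma finite_prefixes_set: "finite {p. prefix p q}"
  by (metis List.finite_set set_prefixes_eq)

lemma internalv_SN: "p \<in> internalv (SN ts l) \<longleftrightarrow>
   (p = [] \<and> ts \<noteq> []) \<or> (\<exists>i q. p = i # q \<and> i < length ts \<and> q \<in> internalv (ts ! i))"
  by (cases p) (auto simp: internalv_def)

lemma leafv_SN: "p \<in> leafv (SN ts l) \<longleftrightarrow>
   (p = [] \<and> ts = []) \<or> (\<exists>i q. p = i # q \<and> i < length ts \<and> q \<in> leafv (ts ! i))"
  by (cases p) (auto simp: leafv_def)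

lemma leafv_ne: "\<exists>q. q \<in> leafv s"
proof (induction s)
  case (SN ts l)
  show ?case
  proof (cases ts)
    case Nil then show ?thesis by (auto simp: leafv_SN)
  next
    case (Cons t ts')
    then obtain q where "q \<in> leafv t" using SN by auto
    then have "0 # q \<in> leafv (SN ts l)" using Cons by (auto simp: leafv_SN)
    then show ?thesis by blast
  qed
qed

lemma leaf_below: "p \<in> internalv s \<Longrightarrow> \<exists>q\<in>leafv s. prefix p q"
proof (induction s arbitrary: p)
  case (SN ts l)
  show ?case
  proof (cases p)
    case Nil
    obtain q where "q \<in> leafv (SN ts l)" using leafv_ne by blast
    then show ?thesis using Nil by auto
  next
    case (Cons i p')
    with SN.prems have i: "i < length ts" "p' \<in> internalv (ts ! i)" by (auto simp: internalv_SN)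
    then obtain q where "q \<in> leafv (ts ! i)" "prefix p' q" using SN.IH[of "ts ! i" p'] by auto
    then have "i # q \<in> leafv (SN ts l)" "prefix p (i # q)" using i Cons by (auto simp: leafv_SN)
    then show ?thesis by blast
  qed
qed

lemma rightmost_leaf: "\<exists>q\<in>leafv s. on_right s q"
proof (induction s)
  case (SN ts l)
  show ?case
  proof (cases "ts = []")
    case True then show ?thesis by (auto simp: leafv_SN)
  next
    case False
    then have "ts ! (length ts - 1) \<in> set ts" by simp
    then obtain q where "q \<in> leafv (ts ! (length ts - 1))" "on_right (ts ! (length ts - 1)) q"
      using SN by blast
    then have "(length ts - 1) # q \<in> leafv (SN ts l)" "on_right (SN ts l) ((length ts - 1) # q)"
      using False by (auto simp: leafv_SN)
    then show ?thesis by blast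
  qed
qed

lemma prefix_set_split: "{p \<in> c. prefix p (i # q)} = (if [] \<in> c then {[]} else {}) \<union> Cons i ` {p \<in> cc c i. prefix p q}"
  by (auto simp: cc_def prefix_Cons)

lemma card_prefix_split: "card {p \<in> c. prefix p (i # q)} = (if [] \<in> c then 1 else 0) + card {p \<in> cc c i. prefix p q}"
proof -
  have f: "finite {p \<in> cc c i. prefix p q}" using finite_prefixes_set by (rule rev_finite_subset) auto
  have "card (Cons i ` {p \<in> cc c i. prefix p q}) = card {p \<in> cc c i. prefix p q}"
    by (rule card_image) (auto simp: inj_on_def)
  moreover have "[] \<notin> Cons i ` {p \<in> cc c i. prefix p q}" by auto
  ultimately show ?thesis using f by (simp add: prefix_set_split)
qed

lemma adm_SN: "adm (SN ts l) c \<longleftrightarrow> (c = {[]} \<and> ts \<noteq> []) \<or>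
   ([] \<notin> c \<and> (\<forall>p\<in>c. \<exists>i q. p = i # q \<and> i < length ts) \<and> (\<forall>i<length ts. adm (ts ! i) (cc c i)))"
  (is "?L \<longleftrightarrow> ?A \<or> ?B")
proof
  assume L: ?L
  show "?A \<or> ?B"
  proof (cases "[] \<in> c")
    case True
    then have ne: "ts \<noteq> []" using L by (auto simp: adm_def internalv_SN)
    have "c = {[]}"
    proof (rule ccontr)
      assume "c \<noteq> {[]}"
      with True obtain p where p: "p \<in> c" "p \<noteq> []" by blast
      then have "p \<in> internalv (SN ts l)" using L by (auto simp: adm_def)
      then obtain q where q: "q \<in> leafv (SN ts l)" "prefix p q" using leaf_below by blast
      have "{[], p} \<subseteq> {p' \<in> c. prefix p' q}" using p q True by auto
      moreover have "finite {p' \<in> c. prefix p' q}" using finite_prefixes_set by (rule rev_finite_subset) auto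
      ultimately have "card {[], p} \<le> card {p' \<in> c. prefix p' q}" by (rule card_mono[rotated])
      moreover have "card {[], p} = 2" using p by simp
      moreover have "card {p' \<in> c. prefix p' q} \<le> 1" using L q by (auto simp: adm_def)
      ultimately show False by simp
    qed
    with ne show ?thesis by simp
  next
    case False
    have 1: "\<forall>p\<in>c. \<exists>i q. p = i # q \<and> i < length ts"
    proof
      fix p assume "p \<in> c"
      then have "p \<in> internalv (SN ts l)" "p \<noteq> []" using L False by (auto simp: adm_def)
      then show "\<exists>i q. p = i # q \<and> i < length ts"
        by (cases p) (simp_all only: internalv_SN list.simps, blast)
    qed
    have 2: "adm (ts ! i) (cc c i)" if i: "i < length ts" for i
      unfolding adm_def
    proof
      show "cc c i \<subseteq> internalv (ts ! i)" using L i by (auto simp: adm_def cc_def internalv_SN)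
      show "\<forall>q\<in>leafv (ts ! i). card {p \<in> cc c i. prefix p q} \<le> 1"
      proof
        fix q assume "q \<in> leafv (ts ! i)"
        then have "i # q \<in> leafv (SN ts l)" using i by (auto simp: leafv_SN)
        then have "card {p \<in> c. prefix p (i # q)} \<le> 1" using L by (auto simp: adm_def)
        then show "card {p \<in> cc c i. prefix p q} \<le> 1" using False by (simp add: card_prefix_split)
      qed
    qed
    show ?thesis using False 1 2 by blast
  qed
next
  assume "?A \<or> ?B"
  then show ?L
  proof
    assume A: ?A
    show ?L unfolding adm_def
    proof
      show "c \<subseteq> internalv (SN ts l)" using A by (auto simp: internalv_SN)
      show "\<forall>q\<in>leafv (SN ts l). card {p \<in> c. prefix p q} \<le> 1"
      proof
        fix q
        have "{p \<in> c. prefix p q} \<subseteq> {[]}" using A by auto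
        then have "card {p \<in> c. prefix p q} \<le> card {[]::nat list}" by (intro card_mono) auto
        then show "card {p \<in> c. prefix p q} \<le> 1" by simp
      qed
    qed
  next
    assume B: ?B
    show ?L unfolding adm_def
    proof
      show "c \<subseteq> internalv (SN ts l)"
      proof
        fix p assume p: "p \<in> c"
        then obtain i q where iq: "p = i # q" "i < length ts" using B by blast
        then have "q \<in> cc c i" using p by (simp add: cc_def)
        then have "q \<in> internalv (ts ! i)" using B iq by (auto simp: adm_def)
        then show "p \<in> internalv (SN ts l)" using iq by (auto simp: internalv_SN)
      qed
      show "\<forall>q\<in>leafv (SN ts l). card {p \<in> c. prefix p q} \<le> 1"
      proof
        fix q assume q: "q \<in> leafv (SN ts l)"
        show "card {p \<in> c. prefix p q} \<le> 1"
        proof (cases q)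
          case Nil
          have e: "{p \<in> c. prefix p q} = {}" using B Nil by auto
          show ?thesis by (subst e) simp
        next
          case (Cons i q')
          then have i: "i < length ts" "q' \<in> leafv (ts ! i)" using q by (auto simp: leafv_SN)
          then have "card {p \<in> cc c i. prefix p q'} \<le> 1" using B by (auto simp: adm_def)
          then show ?thesis using B Cons by (simp add: card_prefix_split)
        qed
      qed
    qed
  qed
qed

lemma adm_empty: "adm s {}"
  by (simp add: adm_def)

lemma cc_Union: "i < n \<Longrightarrow> cc (\<Union>j<n. Cons j ` A j) i = A i"
  by (auto simp: cc_def)

lemma cc_empty[simp]: "cc {} i = {}" by (simp add: cc_def)


lemma map_upt_cong: "(\<And>i. i < n \<Longrightarrow> f i = g i) \<Longrightarrow> map f [0..<n] = map g [0..<n]"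
  by simp

lemma ecut_len: "length (ecut c s) = nlv (cutR c s)"
proof (induction s arbitrary: c)
  case (SN ts l)
  show ?case
  proof (cases "[] \<in> c")
    case True then show ?thesis by (simp add: ecut.simps cutR_simp)
  next
    case False
    show ?thesis
    proof (cases "ts = []")
      case True with False show ?thesis by (simp add: ecut.simps cutR_simp)
    next
      case ne: False
      have IH: "\<And>i. i < length ts \<Longrightarrow> length (ecut (cc c i) (ts!i)) = nlv (cutR (cc c i) (ts!i))"
        using SN.IH nth_mem by blast
      have "length (ecut c (SN ts l)) = sum_list (map (\<lambda>i. length (ecut (cc c i) (ts!i))) [0..<length ts])"
        using False ne by (simp add: ecut.simps length_concat comp_def)
      also have "\<dots> = sum_list (map (\<lambda>i. nlv (cutR (cc c i) (ts!i))) [0..<length ts])"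
        using IH by (simp cong: map_upt_cong)
      also have "\<dots> = nlv (cutR c (SN ts l))"
        using False ne by (simp add: cutR_simp comp_def)
      finally show ?thesis .
    qed
  qed
qed

lemma ecut_wf: "wf s \<Longrightarrow> wf (cutR c s) \<and> (\<forall>g\<in>set (ecut c s). wf g)"
proof (induction s arbitrary: c)
  case (SN ts l)
  show ?case
  proof (cases "[] \<in> c")
    case True then show ?thesis using SN.prems by (simp add: ecut.simps cutR_simp wf_SN)
  next
    case False
    show ?thesis
    proof (cases "ts = []")
      case True with False SN.prems show ?thesis by (simp add: ecut.simps cutR_simp)
    next
      case ne: False
      have IH: "\<And>i. i < length ts \<Longrightarrow> wf (cutR (cc c i) (ts!i)) \<and> (\<forall>g\<in>set (ecut (cc c i) (ts!i)). wf g)"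
        using SN.IH SN.prems nth_mem by (metis wf_SN)
      have "wf (cutR c (SN ts l))"
        using False ne SN.prems IH by (auto simp: cutR_simp wf_SN)
      moreover have "\<forall>g\<in>set (ecut c (SN ts l)). wf g"
        using False ne IH by (auto simp: ecut.simps)
      ultimately show ?thesis by blast
    qed
  qed
qed

lemma chunks_ecut:
  assumes "ts \<noteq> []"
  shows "chunks (map (nlv \<circ> (\<lambda>i. cutR (cc c i) (ts!i))) [0..<length ts])
            (concat (map (\<lambda>i. ecut (cc c i) (ts!i)) [0..<length ts]))
         = map (\<lambda>i. ecut (cc c i) (ts!i)) [0..<length ts]"
proof -
  have "map (nlv \<circ> (\<lambda>i. cutR (cc c i) (ts!i))) [0..<length ts]
        = map length (map (\<lambda>i. ecut (cc c i) (ts!i)) [0..<length ts])"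
    by (simp add: ecut_len)
  then show ?thesis by (simp only: chunks_concat)
qed

lemma graft_ecut: "graft (cutR c s) (ecut c s) = s"
proof (induction s arbitrary: c)
  case (SN ts l)
  show ?case
  proof (cases "[] \<in> c")
    case True then show ?thesis by (simp add: ecut.simps cutR_simp graft.simps)
  next
    case False
    show ?thesis
    proof (cases "ts = []")
      case True with False show ?thesis by (simp add: ecut.simps cutR_simp graft.simps)
    next
      case ne: False
      have IH: "\<And>i. i < length ts \<Longrightarrow> graft (cutR (cc c i) (ts!i)) (ecut (cc c i) (ts!i)) = ts ! i"
        using SN.IH nth_mem by blast
      have "graft (cutR c (SN ts l)) (ecut c (SN ts l)) =
          SN (map (\<lambda>i. graft (cutR (cc c i) (ts!i)) (ecut (cc c i) (ts!i))) [0..<length ts]) l"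
        using False ne by (simp add: ecut.simps cutR_simp graft.simps chunks_ecut)
      also have "\<dots> = SN ts l" using IH by (simp add: map_nth cong: map_upt_cong)
      finally show ?thesis .
    qed
  qed
qed

lemma cutset_ecut: "adm s c \<Longrightarrow> cutset (cutR c s) (ecut c s) = c"
proof (induction s arbitrary: c)
  case (SN ts l)
  show ?case
  proof (cases "[] \<in> c")
    case True
    then have "c = {[]}" "ts \<noteq> []" using SN.prems by (auto simp: adm_SN)
    then show ?thesis by (simp add: ecut.simps cutR_simp cutset.simps)
  next
    case False
    then have B: "\<forall>p\<in>c. \<exists>i q. p = i # q \<and> i < length ts" "\<And>i. i < length ts \<Longrightarrow> adm (ts ! i) (cc c i)"
      using SN.prems by (auto simp: adm_SN)
    show ?thesis
    proof (cases "ts = []")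
      case True
      then have "c = {}" using B by auto
      with True show ?thesis by (simp add: ecut.simps cutR_simp cutset.simps)
    next
      case ne: False
      have IH: "\<And>i. i < length ts \<Longrightarrow> cutset (cutR (cc c i) (ts!i)) (ecut (cc c i) (ts!i)) = cc c i"
        using SN.IH B nth_mem by blast
      have "cutset (cutR c (SN ts l)) (ecut c (SN ts l)) =
          (\<Union>i<length ts. Cons i ` cutset (cutR (cc c i) (ts!i)) (ecut (cc c i) (ts!i)))"
        using False ne by (simp add: ecut.simps cutR_simp cutset.simps chunks_ecut)
      also have "\<dots> = (\<Union>i<length ts. Cons i ` cc c i)" using IH by simp
      also have "\<dots> = c"
      proof
        show "(\<Union>i<length ts. Cons i ` cc c i) \<subseteq> c" by (auto simp: cc_def)
        show "c \<subseteq> (\<Union>i<length ts. Cons i ` cc c i)"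
        proof
          fix p assume "p \<in> c"
          then obtain i q where iq: "p = i # q" "i < length ts" using B(1) by blast
          then have "q \<in> cc c i" using \<open>p \<in> c\<close> by (simp add: cc_def)
          then show "p \<in> (\<Union>i<length ts. Cons i ` cc c i)" using iq by blast
        qed
      qed
      finally show ?thesis .
    qed
  qed
qed

lemma cutP_ecut: "adm s c \<Longrightarrow> cutP c s = filter (\<lambda>g. \<not> isleaf g) (ecut c s)"
proof (induction s arbitrary: c)
  case (SN ts l)
  show ?case
  proof (cases "[] \<in> c")
    case True
    then have "ts \<noteq> []" using SN.prems by (auto simp: adm_SN)
    then show ?thesis using True by (simp add: ecut.simps cutP_simp)
  next
    case False
    then have B: "\<And>i. i < length ts \<Longrightarrow> adm (ts ! i) (cc c i)"
      using SN.prems by (auto simp: adm_SN)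
    have IH: "\<And>i. i < length ts \<Longrightarrow> cutP (cc c i) (ts!i) = filter (\<lambda>g. \<not> isleaf g) (ecut (cc c i) (ts!i))"
      using SN.IH B nth_mem by blast
    show ?thesis
    proof (cases "ts = []")
      case True
      with False show ?thesis by (simp add: ecut.simps cutP_simp)
    next
      case ne: False
      have "cutP c (SN ts l) = concat (map (\<lambda>i. filter (\<lambda>g. \<not> isleaf g) (ecut (cc c i) (ts!i))) [0..<length ts])"
        using False IH by (simp add: cutP_simp cong: map_upt_cong)
      also have "\<dots> = filter (\<lambda>g. \<not> isleaf g) (ecut c (SN ts l))"
        using False ne by (simp add: ecut.simps filter_concat comp_def)
      finally show ?thesis .
    qed
  qed
qed

definition condR :: "'a stree \<Rightarrow> nat list set \<Rightarrow> bool" where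
  "condR s c = (\<forall>p\<in>c. \<forall>q\<in>leafv s. on_right s q \<longrightarrow> \<not> prefix p q)"

lemma last_concat_upt: "0 < n \<Longrightarrow> f (n - 1) \<noteq> [] \<Longrightarrow> last (concat (map f [0..<n])) = last (f (n - 1))"
proof -
  assume n: "0 < n" and ne: "f (n - 1) \<noteq> []"
  then have "[0..<n] = [0..<n-1] @ [n-1]" by (metis Suc_diff_1 upt_Suc_append zero_le)
  then show ?thesis using ne by simp
qed

lemma ecut_ne: "ecut c s \<noteq> []"
  using ecut_len[of c s] nlv_pos[of "cutR c s"] by auto

lemma condR_ecut: "adm s c \<Longrightarrow> condR s c = isleaf (last (ecut c s))"
proof (induction s arbitrary: c)
  case (SN ts l)
  show ?case
  proof (cases "[] \<in> c")
    case True
    then have "ts \<noteq> []" using SN.prems by (auto simp: adm_SN)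
    moreover obtain q where "q \<in> leafv (SN ts l)" "on_right (SN ts l) q" using rightmost_leaf by blast
    moreover have "\<not> condR (SN ts l) c" unfolding condR_def using True calculation Nil_prefix by blast
    ultimately show ?thesis using True by (simp add: ecut.simps)
  next
    case False
    then have B: "\<forall>p\<in>c. \<exists>i q. p = i # q \<and> i < length ts" "\<And>i. i < length ts \<Longrightarrow> adm (ts ! i) (cc c i)"
      using SN.prems by (auto simp: adm_SN)
    show ?thesis
    proof (cases "ts = []")
      case True
      then have "c = {}" using B by auto
      with True show ?thesis by (simp add: ecut.simps condR_def)
    next
      case ne: False
      define k where "k = length ts - 1"
      have k: "k < length ts" using ne by (simp add: k_def)
      have IH: "condR (ts ! k) (cc c k) = isleaf (last (ecut (cc c k) (ts ! k)))"
        using SN.IH B k nth_mem by blast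
      have "last (ecut c (SN ts l)) = last (ecut (cc c k) (ts ! k))"
        using False ne by (simp add: ecut.simps last_concat_upt ecut_ne k_def)
      moreover have "condR (SN ts l) c = condR (ts ! k) (cc c k)"
      proof
        assume L: "condR (SN ts l) c"
        show "condR (ts ! k) (cc c k)" unfolding condR_def
        proof (intro ballI impI)
          fix p q assume pq: "p \<in> cc c k" "q \<in> leafv (ts ! k)" "on_right (ts ! k) q"
          then have "k # p \<in> c" "k # q \<in> leafv (SN ts l)" "on_right (SN ts l) (k # q)"
            using k ne by (auto simp: cc_def leafv_SN k_def)
          then show "\<not> prefix p q" using L unfolding condR_def by fastforce
        qed
      next
        assume R: "condR (ts ! k) (cc c k)"
        show "condR (SN ts l) c" unfolding condR_def
        proof (intro ballI impI notI)
          fix p q assume pq: "p \<in> c" "q \<in> leafv (SN ts l)" "on_right (SN ts l) q" "prefix p q"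
          obtain i p' where p: "p = i # p'" "i < length ts" using B pq by blast
          obtain j q' where q: "q = j # q'" "q' \<in> leafv (ts ! j)" using pq ne by (auto simp: leafv_SN)
          have "j = k" "on_right (ts ! k) q'" using pq q by (auto simp: k_def)
          moreover have "i = j" "prefix p' q'" using pq p q by auto
          moreover have "p' \<in> cc c k" using pq p calculation by (simp add: cc_def)
          ultimately show False using R q unfolding condR_def by blast
        qed
      qed
      ultimately show ?thesis using IH by simp
    qed
  qed
qed


definition Rm :: "('a \<times> bool) list \<Rightarrow> 'a list" where
  "Rm m = map fst (filter snd m)"

fun gaps :: "('a \<times> bool) list \<Rightarrow> 'a list list" where
  "gaps [] = [[]]"
| "gaps ((a, b) # m) = (if b then [] # gaps m else (a # hd (gaps m)) # tl (gaps m))"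

lemma gaps_ne[simp]: "gaps m \<noteq> []"
  by (induction m rule: gaps.induct) auto

lemma gaps_append_True: "gaps (x @ (a, True) # y) = gaps x @ gaps y"
proof (induction x rule: gaps.induct)
  case 1 then show ?case by simp
next
  case (2 b c m)
  show ?case
  proof (cases c)
    case True with 2 show ?thesis by simp
  next
    case False
    have "gaps (m @ (a, True) # y) = gaps m @ gaps y" using 2 False by simp
    moreover obtain g gs where "gaps m = g # gs" using gaps_ne by (cases "gaps m") auto
    ultimately show ?thesis using False by simp
  qed
qed

lemma gaps_False[simp]: "gaps (map (\<lambda>a. (a, False)) u) = [u]"
  by (induction u) auto

lemma length_gaps: "length (gaps m) = Suc (length (Rm m))"
proof (induction m rule: gaps.induct)
  case 1 then show ?case by (simp add: Rm_def)
next
  case (2 a b m)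
  obtain g gs where "gaps m = g # gs" using gaps_ne by (cases "gaps m") auto
  with 2 show ?case by (auto simp: Rm_def)
qed

lemma gaps_ilv: "length ms = Suc (length l) \<Longrightarrow> gaps (ilv ms (map (\<lambda>a. (a, True)) l)) = concat (map gaps ms)"
proof (induction l arbitrary: ms)
  case Nil then show ?case by (cases ms) auto
next
  case (Cons a l)
  then have "length ms = Suc (Suc (length l))" by simp
  then obtain m m2 ms2 where ms: "ms = m # m2 # ms2" using len_Suc_split by blast
  have "gaps (ilv ms (map (\<lambda>a. (a, True)) (a # l))) = gaps m @ gaps (ilv (m2 # ms2) (map (\<lambda>a. (a, True)) l))"
    using ms by (simp add: gaps_append_True)
  also have "\<dots> = gaps m @ concat (map gaps (m2 # ms2))" using Cons ms by simp
  finally show ?case using ms by simp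
qed

lemma Rm_ilv: "length ms = Suc (length l) \<Longrightarrow> Rm (ilv ms (map (\<lambda>a. (a, True)) l)) = ilv (map Rm ms) l"
proof -
  assume len: "length ms = Suc (length l)"
  have "filter snd (ilv ms (map (\<lambda>a. (a, True)) l)) = ilv (map (filter snd) ms) (map (\<lambda>a. (a, True)) l)"
    using len by (intro ilv_filter) auto
  moreover have "map fst (ilv (map (filter snd) ms) (map (\<lambda>a. (a, True)) l)) =
      ilv (map (map fst) (map (filter snd) ms)) (map fst (map (\<lambda>a. (a, True)) l))"
    using len by (intro ilv_map[symmetric]) simp
  moreover have "map fst (map (\<lambda>a. (a, True)) l) = l" by (induction l) auto
  moreover have e: "map Rm ms = map (map fst \<circ> filter snd) ms" by (simp add: Rm_def)
  ultimately show ?thesis unfolding e by (simp add: Rm_def)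
qed

lemma fst_ilv: "length ms = Suc (length l) \<Longrightarrow> map fst (ilv ms (map (\<lambda>a. (a, True)) l)) = ilv (map (map fst) ms) l"
proof -
  assume len: "length ms = Suc (length l)"
  have "map fst (ilv ms (map (\<lambda>a. (a, True)) l)) = ilv (map (map fst) ms) (map fst (map (\<lambda>a. (a, True)) l))"
    using len by (intro ilv_map[symmetric]) simp
  moreover have "map fst (map (\<lambda>a. (a, True)) l) = l" by (induction l) auto
  ultimately show ?thesis by simp
qed

definition goodg :: "'a stree \<Rightarrow> 'a stree list \<Rightarrow> bool" where
  "goodg r gts = (wf r \<and> (\<forall>g\<in>set gts. wf g) \<and> length gts = nlv r)"

lemma goodg_leaf: "goodg (SN [] l) gts \<Longrightarrow> l = [] \<and> (\<exists>g. gts = [g] \<and> wf g)"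
  by (cases gts) (auto simp: goodg_def wf_SN)

lemma goodg_chunk:
  assumes "goodg (SN ts l) gts" "ts \<noteq> []" "i < length ts"
  shows "goodg (ts ! i) (chunks (map nlv ts) gts ! i)"
proof -
  have "sum_list (map nlv ts) = length gts" using assms by (simp add: goodg_def)
  then have "length (chunks (map nlv ts) gts ! i) = nlv (ts ! i)"
    using assms chunks_nth_length[of i "map nlv ts" gts] by simp
  moreover have "set (chunks (map nlv ts) gts ! i) \<subseteq> set gts" using assms by (simp add: chunks_nth_set)
  moreover have "wf (ts ! i)" using assms by (auto simp: goodg_def wf_SN)
  ultimately show ?thesis using assms by (auto simp: goodg_def)
qed

lemma goodg_concat:
  assumes "goodg (SN ts l) gts" "ts \<noteq> []"
  shows "concat (map (\<lambda>i. chunks (map nlv ts) gts ! i) [0..<length ts]) = gts"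
  using assms by (intro concat_map_chunks) (auto simp: goodg_def)

lemma graft_node: "ts \<noteq> [] \<Longrightarrow> graft (SN ts l) gs = SN (map (\<lambda>i. graft (ts ! i) (chunks (map nlv ts) gs ! i)) [0..<length ts]) l"
  by (simp add: graft.simps)

lemma cutR_node_U: "cutR (\<Union>x<n. Cons x ` A x) (SN (map g [0..<n]) l) = SN (map (\<lambda>i. cutR (A i) (g i)) [0..<n]) l"
proof -
  have "[] \<notin> (\<Union>x<n. Cons x ` A x)" by auto
  moreover have "map (\<lambda>i. cutR (cc (\<Union>x<n. Cons x ` A x) i) (map g [0..<n] ! i)) [0..<length (map g [0..<n])]
     = map (\<lambda>i. cutR (A i) (g i)) [0..<n]"
    by (rule nth_equalityI) (auto simp: cc_Union)
  ultimately show ?thesis by (simp only: cutR_simp if_False)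
qed

lemma ecut_node_U: "n \<noteq> 0 \<Longrightarrow> ecut (\<Union>x<n. Cons x ` A x) (SN (map g [0..<n]) l) = concat (map (\<lambda>i. ecut (A i) (g i)) [0..<n])"
proof -
  assume n: "n \<noteq> 0"
  have "[] \<notin> (\<Union>x<n. Cons x ` A x)" by auto
  moreover have "map g [0..<n] \<noteq> []" using n by simp
  moreover have "map (\<lambda>i. ecut (cc (\<Union>x<n. Cons x ` A x) i) (map g [0..<n] ! i)) [0..<length (map g [0..<n])]
     = map (\<lambda>i. ecut (A i) (g i)) [0..<n]"
    by (rule nth_equalityI) (auto simp: cc_Union)
  ultimately show ?thesis by (simp only: ecut.simps if_False)
qed

lemma G_wf: "goodg r gts \<Longrightarrow> wf (graft r gts)"
proof (induction r arbitrary: gts)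
  case (SN ts l)
  show ?case
  proof (cases "ts = []")
    case True
    then obtain g where "gts = [g]" "wf g" using goodg_leaf SN.prems by blast
    then show ?thesis using True by (simp add: graft.simps)
  next
    case False
    have IH: "\<And>i. i < length ts \<Longrightarrow> wf (graft (ts ! i) (chunks (map nlv ts) gts ! i))"
      using SN.IH goodg_chunk[OF SN.prems False] nth_mem by blast
    show ?thesis using False SN.prems IH by (auto simp: graft_node wf_SN goodg_def)
  qed
qed

lemma G_adm: "goodg r gts \<Longrightarrow> adm (graft r gts) (cutset r gts)"
proof (induction r arbitrary: gts)
  case (SN ts l)
  show ?case
  proof (cases "ts = []")
    case True
    then obtain g where g: "gts = [g]" "wf g" using goodg_leaf SN.prems by blast
    show ?thesis
    proof (cases "isleaf g")
      case True then show ?thesis using g \<open>ts = []\<close> by (simp add: graft.simps cutset.simps adm_empty)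
    next
      case False
      then obtain ts' l' where "g = SN ts' l'" "ts' \<noteq> []" by (cases g) auto
      then show ?thesis using g \<open>ts = []\<close> by (simp add: graft.simps cutset.simps adm_SN)
    qed
  next
    case False
    have IH: "\<And>i. i < length ts \<Longrightarrow> adm (graft (ts ! i) (chunks (map nlv ts) gts ! i)) (cutset (ts ! i) (chunks (map nlv ts) gts ! i))"
      using SN.IH goodg_chunk[OF SN.prems False] nth_mem by blast
    show ?thesis using False IH
      by (auto simp: graft_node cutset.simps adm_SN cc_Union)
  qed
qed

lemma G_cutR: "goodg r gts \<Longrightarrow> cutR (cutset r gts) (graft r gts) = r"
proof (induction r arbitrary: gts)
  case (SN ts l)
  show ?case
  proof (cases "ts = []")
    case True
    then obtain g where g: "gts = [g]" "wf g" "l = []" using goodg_leaf SN.prems by blast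
    show ?thesis
    proof (cases "isleaf g")
      case True
      then have "g = SN [] []" using g wf_leaf by blast
      then show ?thesis using g True \<open>ts = []\<close> by (simp add: graft.simps cutset.simps cutR_simp)
    next
      case False
      then show ?thesis using g \<open>ts = []\<close> by (cases g) (simp add: graft.simps cutset.simps cutR_simp)
    qed
  next
    case False
    have IH: "\<And>i. i < length ts \<Longrightarrow> cutR (cutset (ts ! i) (chunks (map nlv ts) gts ! i)) (graft (ts ! i) (chunks (map nlv ts) gts ! i)) = ts ! i"
      using SN.IH goodg_chunk[OF SN.prems False] nth_mem by blast
    have "cutR (cutset (SN ts l) gts) (graft (SN ts l) gts) =
       SN (map (\<lambda>i. cutR (cutset (ts ! i) (chunks (map nlv ts) gts ! i)) (graft (ts ! i) (chunks (map nlv ts) gts ! i))) [0..<length ts]) l"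
      using False by (simp add: graft_node cutset.simps cutR_node_U)
    also have "\<dots> = SN ts l" using IH by (simp add: map_nth cong: map_upt_cong)
    finally show ?thesis .
  qed
qed

lemma G_ecut: "goodg r gts \<Longrightarrow> ecut (cutset r gts) (graft r gts) = gts"
proof (induction r arbitrary: gts)
  case (SN ts l)
  show ?case
  proof (cases "ts = []")
    case True
    then obtain g where g: "gts = [g]" "wf g" "l = []" using goodg_leaf SN.prems by blast
    show ?thesis
    proof (cases "isleaf g")
      case True
      then have "g = SN [] []" using g wf_leaf by blast
      then show ?thesis using g True \<open>ts = []\<close> by (simp add: graft.simps cutset.simps ecut.simps)
    next
      case False
      then show ?thesis using g \<open>ts = []\<close> by (cases g) (simp add: graft.simps cutset.simps ecut.simps)
    qed
  next
    case False
    have IH: "\<And>i. i < length ts \<Longrightarrow> ecut (cutset (ts ! i) (chunks (map nlv ts) gts ! i)) (graft (ts ! i) (chunks (map nlv ts) gts ! i)) = chunks (map nlv ts) gts ! i"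
      using SN.IH goodg_chunk[OF SN.prems False] nth_mem by blast
    have "ecut (cutset (SN ts l) gts) (graft (SN ts l) gts) =
       concat (map (\<lambda>i. ecut (cutset (ts ! i) (chunks (map nlv ts) gts ! i)) (graft (ts ! i) (chunks (map nlv ts) gts ! i))) [0..<length ts])"
      using False by (simp add: graft_node cutset.simps ecut_node_U)
    also have "\<dots> = gts" using IH goodg_concat[OF SN.prems False] by (simp cong: map_upt_cong)
    finally show ?thesis .
  qed
qed

lemma G_mk: "goodg r gts \<Longrightarrow> Rm (mk r gts) = reading r \<and> gaps (mk r gts) = map reading gts
   \<and> map fst (mk r gts) = reading (graft r gts)"
proof (induction r arbitrary: gts)
  case (SN ts l)
  show ?case
  proof (cases "ts = []")
    case True
    then obtain g where g: "gts = [g]" "wf g" "l = []" using goodg_leaf SN.prems by blast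
    then show ?thesis using True by (simp add: graft.simps mk.simps Rm_def comp_def)
  next
    case False
    define ch where "ch = (\<lambda>i. chunks (map nlv ts) gts ! i)"
    have IH: "\<And>i. i < length ts \<Longrightarrow> Rm (mk (ts ! i) (ch i)) = reading (ts ! i) \<and> gaps (mk (ts ! i) (ch i)) = map reading (ch i)
   \<and> map fst (mk (ts ! i) (ch i)) = reading (graft (ts ! i) (ch i))"
      using SN.IH goodg_chunk[OF SN.prems False] nth_mem unfolding ch_def by blast
    have len: "length (map (\<lambda>i. mk (ts ! i) (ch i)) [0..<length ts]) = Suc (length l)"
      using SN.prems False by (auto simp: goodg_def wf_SN)
    have mk: "mk (SN ts l) gts = ilv (map (\<lambda>i. mk (ts ! i) (ch i)) [0..<length ts]) (map (\<lambda>a. (a, True)) l)"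
      using False by (simp add: mk.simps ch_def)
    have 1: "Rm (mk (SN ts l) gts) = reading (SN ts l)"
      using len IH by (simp add: mk Rm_ilv map_idx[of reading ts] cong: map_upt_cong)
    have "gaps (mk (SN ts l) gts) = concat (map (\<lambda>i. map reading (ch i)) [0..<length ts])"
      using len IH by (simp add: mk gaps_ilv cong: map_upt_cong)
    also have "\<dots> = map reading (concat (map ch [0..<length ts]))" by (simp add: map_concat comp_def)
    also have "\<dots> = map reading gts" using goodg_concat[OF SN.prems False] by (simp add: ch_def)
    finally have 2: "gaps (mk (SN ts l) gts) = map reading gts" .
    have "map fst (mk (SN ts l) gts) = ilv (map (\<lambda>i. reading (graft (ts ! i) (ch i))) [0..<length ts]) l"
      using len IH by (simp add: mk fst_ilv cong: map_upt_cong)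
    also have "\<dots> = reading (graft (SN ts l) gts)"
      using False by (simp add: graft_node reading_SN ch_def cong: map_upt_cong)
    finally show ?thesis using 1 2 by blast
  qed
qed


fun mskr :: "nat set \<Rightarrow> nat \<Rightarrow> 'a list \<Rightarrow> ('a \<times> bool) list" where
  "mskr S i [] = []"
| "mskr S i (a # w) = (a, i \<in> S) # mskr S (Suc i) w"

lemma mskr_fst[simp]: "map fst (mskr S i w) = w"
  by (induction w arbitrary: i) auto

lemma mskr_len[simp]: "length (mskr S i w) = length w"
  by (induction w arbitrary: i) auto

lemma mskr_nth: "j < length w \<Longrightarrow> mskr S i w ! j = (w ! j, i + j \<in> S)"
proof (induction w arbitrary: i j)
  case (Cons a w)
  then show ?case by (cases j) auto
qed simp

lemma mskr_of: "map fst m = w \<Longrightarrow> m = mskr {j. j < length w \<and> snd (m ! j)} 0 w"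
proof -
  assume a: "map fst m = w"
  then have len: "length m = length w" by auto
  show ?thesis
  proof (rule nth_equalityI)
    show "length m = length (mskr {j. j < length w \<and> snd (m ! j)} 0 w)" using len by simp
    fix j assume j: "j < length m"
    then have 1: "mskr {j. j < length w \<and> snd (m ! j)} 0 w ! j = (w ! j, j \<in> {j. j < length w \<and> snd (m ! j)})"
      using len by (simp add: mskr_nth)
    have 2: "fst (m ! j) = w ! j" using a j by auto
    have 3: "(j \<in> {j. j < length w \<and> snd (m ! j)}) = snd (m ! j)" using j len by simp
    show "m ! j = mskr {j. j < length w \<and> snd (m ! j)} 0 w ! j"
      unfolding 1 3 2[symmetric] by simp
  qed
qed

lemma mskr_set: "S \<subseteq> {..<length w} \<Longrightarrow> {j. j < length w \<and> snd (mskr S 0 w ! j)} = S"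
proof (rule set_eqI)
  fix j assume S: "S \<subseteq> {..<length w}"
  show "(j \<in> {j. j < length w \<and> snd (mskr S 0 w ! j)}) = (j \<in> S)"
  proof (cases "j < length w")
    case True then show ?thesis by (simp add: mskr_nth)
  next
    case False then show ?thesis using S by auto
  qed
qed

lemma cutw_mskr: "cutw S i w = gaps (mskr S i w)"
proof (induction w arbitrary: i)
  case Nil then show ?case by simp
next
  case (Cons a w)
  obtain g gs where "gaps (mskr S (Suc i) w) = g # gs" using gaps_ne by (cases "gaps (mskr S (Suc i) w)") auto
  then show ?case using Cons by simp
qed

lemma Rm_mskr: "Rm (mskr S i w) = nths w {j. i + j \<in> S}"
proof (induction w arbitrary: i)
  case Nil then show ?case by (simp add: Rm_def)
next
  case (Cons a w)
  have "Rm (mskr S i (a # w)) = (if i \<in> S then [a] else []) @ Rm (mskr S (Suc i) w)"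
    by (simp add: Rm_def)
  also have "\<dots> = (if i \<in> S then [a] else []) @ nths w {j. Suc i + j \<in> S}" using Cons by simp
  also have "\<dots> = nths (a # w) {j. i + j \<in> S}" by (simp add: nths_Cons)
  finally show ?case .
qed

lemma Rm_msk: "Rm (mskr S 0 w) = nths w S"
  using Rm_mskr[of S 0 w] by simp

lemma Pw_msk: "Pw S w = filter (\<lambda>u. u \<noteq> []) (gaps (mskr S 0 w))"
  by (simp add: Pw_def cutw_mskr)

lemma Rw_msk: "Rw S w = (if Rm (mskr S 0 w) = [] then [] else [Rm (mskr S 0 w)])"
  by (simp add: Rw_def Rm_msk)

lemma mskr_last: "w \<noteq> [] \<Longrightarrow> snd (last (mskr S 0 w)) = (length w - 1 \<in> S)"
proof -
  assume "w \<noteq> []"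
  then have "mskr S 0 w \<noteq> []" by (metis mskr_len length_0_conv)
  then have "last (mskr S 0 w) = mskr S 0 w ! (length w - 1)"
    by (simp add: last_conv_nth)
  then show ?thesis using \<open>w \<noteq> []\<close> by (simp add: mskr_nth)
qed

lemma gaps_snoc_False: "last (gaps (x @ [(a, False)])) \<noteq> []"
proof (induction x rule: gaps.induct)
  case 1 then show ?case by simp
next
  case (2 c b m)
  obtain g gs where G: "gaps (m @ [(a, False)]) = g # gs" using gaps_ne by (cases "gaps (m @ [(a, False)])") auto
  show ?case
  proof (cases b)
    case True then show ?thesis using 2 by simp
  next
    case False
    then show ?thesis using 2 G by (cases gs) auto
  qed
qed

lemma gaps_last: "m \<noteq> [] \<Longrightarrow> (last (gaps m) = []) = snd (last m)"
proof -
  assume "m \<noteq> []"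
  then obtain x a b where m: "m = x @ [(a, b)]" by (metis append_butlast_last_id prod.collapse)
  show ?thesis
  proof (cases b)
    case True
    have "gaps (x @ (a, True) # []) = gaps x @ gaps []" by (rule gaps_append_True)
    then show ?thesis using m True by simp
  next
    case False
    then show ?thesis using m gaps_snoc_False by simp
  qed
qed

fun rebuild :: "'a list \<Rightarrow> 'a list list \<Rightarrow> ('a \<times> bool) list" where
  "rebuild [] gs = map (\<lambda>x. (x, False)) (hd gs)"
| "rebuild (a # rs) gs = map (\<lambda>x. (x, False)) (hd gs) @ (a, True) # rebuild rs (tl gs)"

lemma rebuild_cons: "rebuild rs ((a # g) # gs) = (a, False) # rebuild rs (g # gs)"
  by (cases rs) auto

lemma rebuild_gaps: "rebuild (Rm m) (gaps m) = m"
proof (induction m rule: gaps.induct)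
  case 1 then show ?case by (simp add: Rm_def)
next
  case (2 a b m)
  obtain g gs where G: "gaps m = g # gs" using gaps_ne by (cases "gaps m") auto
  show ?case
  proof (cases b)
    case True
    then have "Rm ((a, b) # m) = a # Rm m" by (simp add: Rm_def)
    then show ?thesis using True 2 by simp
  next
    case False
    then have "Rm ((a, b) # m) = Rm m" by (simp add: Rm_def)
    then show ?thesis using False 2 G by (simp add: rebuild_cons)
  qed
qed

lemma gaps_Rm_inj: "Rm m1 = Rm m2 \<Longrightarrow> gaps m1 = gaps m2 \<Longrightarrow> m1 = m2"
  by (metis rebuild_gaps)


lemma dec_inj: "swf s \<Longrightarrow> swf s' \<Longrightarrow> shape s = shape s' \<Longrightarrow> reading s = reading s' \<Longrightarrow> s = s'"
proof (induction s arbitrary: s')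
  case (SN ts l)
  obtain ts' l' where s': "s' = SN ts' l'" by (cases s')
  have sh: "map shape ts = map shape ts'" using SN.prems s' by simp
  then have len: "length ts' = length ts" by (metis length_map)
  show ?case
  proof (cases "ts = []")
    case True
    then show ?thesis using SN.prems s' len by simp
  next
    case False
    have lr: "\<And>t. swf t \<Longrightarrow> length (reading t) = leaves (shape t) - 1"
      using reading_len leaves_shape by (metis add_diff_cancel_right')
    have ml: "map length (map reading ts) = map length (map reading ts')"
    proof (rule nth_equalityI)
      show "length (map length (map reading ts)) = length (map length (map reading ts'))" using len by simp
      fix i assume "i < length (map length (map reading ts))"
      then have i: "i < length ts" by simp
      have "shape (ts ! i) = shape (ts' ! i)" using sh i len by (metis nth_map)
      moreover have "swf (ts ! i)" "swf (ts' ! i)" using SN.prems s' i len by auto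
      ultimately show "map length (map reading ts) ! i = map length (map reading ts') ! i"
        using i len lr[of "ts ! i"] lr[of "ts' ! i"] by simp
    qed
    have "map reading ts = map reading ts' \<and> l = l'"
      using SN.prems s' False len ml by (intro ilv_inj) auto
    then have rd: "map reading ts = map reading ts'" and ll: "l = l'" by auto
    have "ts = ts'"
    proof (rule nth_equalityI)
      show "length ts = length ts'" using len by simp
      fix i assume i: "i < length ts"
      have "shape (ts ! i) = shape (ts' ! i)" using sh i len by (metis nth_map)
      moreover have "reading (ts ! i) = reading (ts' ! i)" using rd i len by (metis nth_map)
      moreover have "swf (ts ! i)" "swf (ts' ! i)" using SN.prems s' i len by auto
      ultimately show "ts ! i = ts' ! i" using SN.IH i by auto
    qed
    then show ?thesis using ll s' by simp
  qed
qed

lemma leaves_pos: "1 \<le> leaves T"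
proof (induction T)
  case (Nd ts)
  show ?case
  proof (cases ts)
    case (Cons t ts')
    then have "1 \<le> leaves t" using Nd by simp
    then show ?thesis using Cons by simp
  qed simp
qed

lemma split_ex: "ks \<noteq> [] \<Longrightarrow> length u = sum_list ks + length ks - 1 \<Longrightarrow>
   \<exists>rs l. map length rs = ks \<and> length l = length ks - 1 \<and> ilv rs l = u"
proof (induction ks arbitrary: u)
  case Nil then show ?case by simp
next
  case (Cons k ks)
  show ?case
  proof (cases "ks = []")
    case True
    then show ?thesis
      using Cons.prems by (intro exI[where x="[u]"] exI[where x="[]"]) simp
  next
    case False
    have lk: "length u \<ge> Suc k" using Cons.prems False by (cases ks) auto
    have "length (drop (Suc k) u) = sum_list ks + length ks - 1" using Cons.prems False lk by (cases ks) auto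
    then obtain rs l where rl: "map length rs = ks" "length l = length ks - 1" "ilv rs l = drop (Suc k) u"
      using Cons.IH False by blast
    have rsne: "rs \<noteq> []" using rl False by auto
    have "map length (take k u # rs) = k # ks" using rl lk by simp
    moreover have "length (u ! k # l) = length (k # ks) - 1" using rl False by (cases ks) auto
    moreover have "ilv (take k u # rs) (u ! k # l) = u"
      using rsne rl lk by (simp add: ilv_Cons id_take_nth_drop[symmetric])
    ultimately show ?thesis by (intro exI[where x="take k u # rs"] exI[where x="u ! k # l"]) simp
  qed
qed

lemma sum_list_leaves: "sum_list (map leaves ts) = sum_list (map (\<lambda>t. leaves t - 1) ts) + length ts"
proof -
  have h: "\<And>t. leaves t = leaves t - 1 + 1" using leaves_pos by (metis le_add_diff_inverse2)
  have e: "map leaves ts = map (\<lambda>t. leaves t - 1 + 1) ts" using h by (induction ts) auto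
  show ?thesis unfolding e by (rule sum_list_map_Suc)
qed

lemma deco_ex: "reduced T \<Longrightarrow> leaves T = length u + 1 \<Longrightarrow> \<exists>s. swf s \<and> shape s = T \<and> reading s = u"
proof (induction T arbitrary: u)
  case (Nd ts)
  show ?case
  proof (cases "ts = []")
    case True
    then have "u = []" using Nd.prems by simp
    then have "swf (SN [] []) \<and> shape (SN [] []) = Nd ts \<and> reading (SN [] []) = u" using True by simp
    then show ?thesis by blast
  next
    case False
    define ks where "ks = map (\<lambda>t. leaves t - 1) ts"
    have "length u = sum_list ks + length ks - 1"
      using Nd.prems False sum_list_leaves[of ts] by (simp add: ks_def)
    then obtain rs l where rl: "map length rs = ks" "length l = length ks - 1" "ilv rs l = u"
      using split_ex[of ks u] False by (auto simp: ks_def)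
    have lrs: "length rs = length ts" using rl by (metis ks_def length_map)
    have ex: "\<And>i. i < length ts \<Longrightarrow> \<exists>s. swf s \<and> shape s = ts ! i \<and> reading s = rs ! i"
    proof -
      fix i assume i: "i < length ts"
      have "reduced (ts ! i)" using Nd.prems i by simp
      moreover have "leaves (ts ! i) = length (rs ! i) + 1"
      proof -
        have "length (rs ! i) = ks ! i" using rl i lrs by (metis nth_map)
        then show ?thesis using i leaves_pos[of "ts ! i"] by (simp add: ks_def)
      qed
      ultimately show "\<exists>s. swf s \<and> shape s = ts ! i \<and> reading s = rs ! i"
        using Nd.IH i nth_mem by blast
    qed
    define ss where "ss = map (\<lambda>i. SOME s. swf s \<and> shape s = ts ! i \<and> reading s = rs ! i) [0..<length ts]"
    have ssp: "\<And>i. i < length ts \<Longrightarrow> swf (ss ! i) \<and> shape (ss ! i) = ts ! i \<and> reading (ss ! i) = rs ! i"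
    proof -
      fix i assume i: "i < length ts"
      have "ss ! i = (SOME s. swf s \<and> shape s = ts ! i \<and> reading s = rs ! i)" using i by (simp add: ss_def)
      then show "swf (ss ! i) \<and> shape (ss ! i) = ts ! i \<and> reading (ss ! i) = rs ! i"
        using someI_ex[OF ex[OF i]] by simp
    qed
    have lss: "length ss = length ts" by (simp add: ss_def)
    have "map shape ss = ts" using ssp lss by (intro nth_equalityI) auto
    moreover have "map reading ss = rs" using ssp lss lrs by (intro nth_equalityI) auto
    moreover have "\<forall>t\<in>set ss. swf t" using ssp lss by (metis in_set_conv_nth)
    ultimately have "swf (SN ss l) \<and> shape (SN ss l) = Nd ts \<and> reading (SN ss l) = u"
      using rl lss by (simp add: ks_def)
    then show ?thesis by blast
  qed
qed

lemma wf_tob: "wf r \<Longrightarrow> reading r \<noteq> [] \<Longrightarrow> tob r = [dec r]"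
proof -
  assume "wf r" "reading r \<noteq> []"
  then have "\<not> isleaf r" using wf_reading_nil by blast
  then show ?thesis by (cases r) (simp add: tob_def)
qed

lemma subsingleton_finite: "(\<And>a b. a \<in> A \<Longrightarrow> b \<in> A \<Longrightarrow> a = b) \<Longrightarrow> finite A"
proof (cases "A = {}")
  case False
  assume u: "\<And>a b. a \<in> A \<Longrightarrow> b \<in> A \<Longrightarrow> a = b"
  from False obtain a where "a \<in> A" by blast
  then have "A \<subseteq> {a}" using u by blast
  then show ?thesis using finite_subset by blast
qed simp

lemma dec_inj_wf: "wf r \<Longrightarrow> wf r' \<Longrightarrow> dec r = dec r' \<Longrightarrow> r = r'"
  unfolding wf_def dec_def using dec_inj by blast

lemma iw_nonzero: "iota_word u p \<noteq> 0 \<longleftrightarrow> (\<exists>T. p = [(T, u)] \<and> reduced T \<and> leaves T = length u + 1)"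
  by (simp add: iota_word_def)

lemma L0: "card {r. wf r \<and> reading r = u \<and> [dec r] = p} = iota_word u p
   \<and> finite {r. wf r \<and> reading r = u \<and> [dec r] = p}"
proof -
  let ?A = "{r. wf r \<and> reading r = u \<and> [dec r] = p}"
  have fin: "finite ?A"
  proof (rule subsingleton_finite)
    fix a b assume "a \<in> ?A" "b \<in> ?A"
    then show "a = b" using dec_inj_wf by auto
  qed
  show ?thesis
  proof (cases "\<exists>T. p = [(T, u)] \<and> reduced T \<and> leaves T = length u + 1")
    case True
    then obtain T where T: "p = [(T, u)]" "reduced T" "leaves T = length u + 1" by blast
    then obtain s where s: "swf s" "shape s = T" "reading s = u" using deco_ex by blast
    have "?A = {s}"
    proof
      show "{s} \<subseteq> ?A" using s T by (auto simp: wf_def dec_def)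
      show "?A \<subseteq> {s}"
      proof
        fix r assume "r \<in> ?A"
        then have "wf r" "dec r = dec s" using s T by (auto simp: dec_def)
        moreover have "wf s" using s T by (simp add: wf_def)
        ultimately show "r \<in> {s}" using dec_inj_wf by blast
      qed
    qed
    then show ?thesis using True by (simp add: iota_word_def)
  next
    case False
    have e: "?A = {}"
    proof (rule ccontr)
      assume "?A \<noteq> {}"
      then obtain r where r: "wf r" "reading r = u" "[dec r] = p" by blast
      have "length (reading r) + 1 = nlv r" using wf_len r(1) by blast
      then have "p = [(shape r, u)]" "reduced (shape r)" "leaves (shape r) = length u + 1"
        using r unfolding dec_def wf_def leaves_shape by auto
      then show False using False by blast
    qed
    show ?thesis using False unfolding e iota_word_def by simp
  qed
qed

lemma L0_leaf: "card {r. wf r \<and> reading r = [] \<and> tob r = p} = vone p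
   \<and> finite {r. wf r \<and> reading r = [] \<and> tob r = p}"
proof -
  have e1: "\<And>r. wf r \<Longrightarrow> reading r = [] \<Longrightarrow> r = SN [] []" using wf_reading_nil wf_leaf by blast
  have e2: "wf (SN [] []) \<and> reading (SN [] []) = []" by (simp add: wf_def)
  have e3: "tob (SN [] []) = ([]::'a dtree list)" by (simp add: tob_def)
  show ?thesis
  proof (cases "p = []")
    case True
    have "{r. wf r \<and> reading r = [] \<and> tob r = p} = {SN [] []}"
    proof
      show "{r. wf r \<and> reading r = [] \<and> tob r = p} \<subseteq> {SN [] []}" using e1 by blast
      show "{SN [] []} \<subseteq> {r. wf r \<and> reading r = [] \<and> tob r = p}" using e2 e3 True by simp
    qed
    then show ?thesis using True by (simp add: vone_def)
  next
    case False
    have e: "{r. wf r \<and> reading r = [] \<and> tob r = p} = {}"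
    proof (rule ccontr)
      assume "{r. wf r \<and> reading r = [] \<and> tob r = p} \<noteq> {}"
      then obtain r where "wf r" "reading r = []" "tob r = p" by blast
      then have "r = SN [] []" "tob r = p" using e1 by blast+
      then show False using e3 False by simp
    qed
    show ?thesis using False unfolding e by (simp add: vone_def)
  qed
qed


lemma iota_Nil: "iota [] = vone" by (simp add: iota_def)

lemma iota_Cons: "iota (w # ws) = vmult (iota_word w) (iota ws)" by (simp add: iota_def)

lemma sum_single: "finite A \<Longrightarrow> a \<in> A \<Longrightarrow> (\<And>i. i \<in> A \<Longrightarrow> i \<noteq> a \<Longrightarrow> f i = 0) \<Longrightarrow> sum f A = f a"
proof -
  assume "finite A" "a \<in> A" and z: "\<And>i. i \<in> A \<Longrightarrow> i \<noteq> a \<Longrightarrow> f i = 0"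
  then have "sum f A = f a + sum f (A - {a})" by (simp add: sum.remove)
  moreover have "sum f (A - {a}) = 0" using z by (intro sum.neutral) auto
  ultimately show ?thesis by simp
qed

lemma iw_zero: "length h \<noteq> 1 \<Longrightarrow> iota_word u h = 0"
  by (auto simp: iota_word_def)

lemma iw_single: "iota_word u p = (case p of [] \<Rightarrow> 0 | x # p' \<Rightarrow> iota_word u [x] * vone p')"
proof (cases p)
  case Nil then show ?thesis by (simp add: iw_zero)
next
  case (Cons x p')
  show ?thesis
  proof (cases "p' = []")
    case True then show ?thesis using Cons by (simp add: vone_def)
  next
    case False then show ?thesis using Cons by (simp add: vone_def iw_zero)
  qed
qed

lemma vmult_iw: "vmult (iota_word u) Y q = (case q of [] \<Rightarrow> 0 | x # q' \<Rightarrow> iota_word u [x] * Y q')"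
proof (cases q)
  case Nil then show ?thesis by (simp add: vmult_def iw_zero)
next
  case (Cons x q')
  have "vmult (iota_word u) Y q = (\<Sum>i\<le>length q. iota_word u (take i q) * Y (drop i q))"
    by (simp add: vmult_def)
  also have "\<dots> = iota_word u (take 1 q) * Y (drop 1 q)"
  proof (rule sum_single)
    show "finite {..length q}" by simp
    show "1 \<in> {..length q}" using Cons by simp
    fix i assume "i \<in> {..length q}" "i \<noteq> 1"
    then have "length (take i q) \<noteq> 1" by auto
    then show "iota_word u (take i q) * Y (drop i q) = 0" by (simp add: iw_zero)
  qed
  finally show ?thesis using Cons by simp
qed

lemma iota_single: "iota [u] = iota_word u"
proof
  fix q
  show "iota [u] q = iota_word u q"
    by (simp add: iota_Cons iota_Nil vmult_iw iw_single[of u q] split: list.split)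
qed

definition Bset :: "'a list list \<Rightarrow> 'a dtree list \<Rightarrow> 'a stree list set" where
  "Bset gs q = {gts. list_all2 (\<lambda>g u. wf g \<and> reading g = u) gts gs \<and> map dec (filter (\<lambda>g. \<not> isleaf g) gts) = q}"

lemma Bset_card: "finite (Bset gs q) \<and> card (Bset gs q) = iota (filter (\<lambda>u. u \<noteq> []) gs) q"
proof (induction gs arbitrary: q)
  case Nil
  have "Bset [] q = (if q = [] then {[]} else {})" by (auto simp: Bset_def)
  then show ?case by (simp add: iota_Nil vone_def)
next
  case (Cons u gs)
  show ?case
  proof (cases "u = []")
    case True
    have e1: "\<And>r. wf r \<Longrightarrow> reading r = [] \<Longrightarrow> r = SN [] []" using wf_reading_nil wf_leaf by blast
    have e2: "wf (SN [] []) \<and> reading (SN [] []) = []" by (simp add: wf_def)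
    have eq: "Bset (u # gs) q = Cons (SN [] []) ` Bset gs q"
    proof
      show "Bset (u # gs) q \<subseteq> Cons (SN [] []) ` Bset gs q"
      proof
        fix gts assume "gts \<in> Bset (u # gs) q"
        then obtain g gts' where g: "gts = g # gts'" "wf g" "reading g = []"
          "list_all2 (\<lambda>g u. wf g \<and> reading g = u) gts' gs"
          "map dec (filter (\<lambda>g. \<not> isleaf g) gts) = q"
          using True by (auto simp: Bset_def list_all2_Cons2)
        then have "g = SN [] []" using e1 by blast
        then have "gts' \<in> Bset gs q" using g by (simp add: Bset_def)
        then show "gts \<in> Cons (SN [] []) ` Bset gs q" using g \<open>g = SN [] []\<close> by blast
      qed
      show "Cons (SN [] []) ` Bset gs q \<subseteq> Bset (u # gs) q"
        using e2 True by (auto simp: Bset_def)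
    qed
    have "card (Cons (SN [] []) ` Bset gs q) = card (Bset gs q)" by (rule card_image) auto
    then show ?thesis using eq Cons.IH[of q] True by simp
  next
    case False
    have e1: "\<And>r. wf r \<Longrightarrow> reading r = u \<Longrightarrow> \<not> isleaf r" using wf_reading_nil False by blast
    show ?thesis
    proof (cases q)
      case Nil
      have e: "Bset (u # gs) q = {}"
      proof (rule ccontr)
        assume "Bset (u # gs) q \<noteq> {}"
        then obtain gts where "gts \<in> Bset (u # gs) q" by blast
        then obtain g gts' where g: "gts = g # gts'" "wf g" "reading g = u"
          "map dec (filter (\<lambda>g. \<not> isleaf g) gts) = q"
          by (auto simp: Bset_def list_all2_Cons2)
        then show False using e1 Nil by simp
      qed
      show ?thesis unfolding e using Nil False by (simp add: iota_Cons vmult_iw)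
    next
      case (Cons x q')
      define G where "G = {r. wf r \<and> reading r = u \<and> [dec r] = [x]}"
      have eq: "Bset (u # gs) q = (\<lambda>(g, gts). g # gts) ` (G \<times> Bset gs q')"
      proof
        show "Bset (u # gs) q \<subseteq> (\<lambda>(g, gts). g # gts) ` (G \<times> Bset gs q')"
        proof
          fix gts assume "gts \<in> Bset (u # gs) q"
          then obtain g gts' where g: "gts = g # gts'" "wf g" "reading g = u"
            "list_all2 (\<lambda>g u. wf g \<and> reading g = u) gts' gs"
            "map dec (filter (\<lambda>g. \<not> isleaf g) gts) = q"
            by (auto simp: Bset_def list_all2_Cons2)
          then have "\<not> isleaf g" using e1 by blast
          then have "dec g = x" "map dec (filter (\<lambda>g. \<not> isleaf g) gts') = q'" using g Cons by auto
          then have "g \<in> G" "gts' \<in> Bset gs q'" using g by (auto simp: G_def Bset_def)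
          then show "gts \<in> (\<lambda>(g, gts). g # gts) ` (G \<times> Bset gs q')" using g by force
        qed
        show "(\<lambda>(g, gts). g # gts) ` (G \<times> Bset gs q') \<subseteq> Bset (u # gs) q"
        proof
          fix y assume "y \<in> (\<lambda>(g, gts). g # gts) ` (G \<times> Bset gs q')"
          then obtain g gts where y: "y = g # gts" "g \<in> G" "gts \<in> Bset gs q'" by auto
          then have "\<not> isleaf g" using e1 by (auto simp: G_def)
          then show "y \<in> Bset (u # gs) q" using y Cons by (auto simp: G_def Bset_def)
        qed
      qed
      have inj: "inj_on (\<lambda>(g, gts). g # gts) (G \<times> Bset gs q')" by (auto simp: inj_on_def)
      have L: "card G = iota_word u [x]" "finite G" using L0[of u "[x]"] by (simp_all add: G_def)
      have "card (Bset (u # gs) q) = card G * card (Bset gs q')"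
        unfolding eq using inj by (simp add: card_image card_cartesian_product)
      moreover have "finite (Bset (u # gs) q)" unfolding eq using L Cons.IH[of q'] by simp
      ultimately show ?thesis using L Cons.IH[of q'] \<open>q = x # q'\<close> False
        by (simp add: iota_Cons vmult_iw)
    qed
  qed
qed


definition Dset :: "bool \<Rightarrow> 'a list \<Rightarrow> 'a dtree list \<Rightarrow> 'a dtree list \<Rightarrow> ('a stree \<times> nat list set) set" where
  "Dset b w p q = {(s, c). wf s \<and> reading s = w \<and> adm s c \<and> (b \<longrightarrow> condR s c)
       \<and> tob (cutR c s) = p \<and> map dec (cutP c s) = q}"

definition Eset :: "bool \<Rightarrow> 'a list \<Rightarrow> 'a dtree list \<Rightarrow> 'a dtree list \<Rightarrow> ('a stree \<times> 'a stree list) set" where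
  "Eset b w p q = {(r, gts). goodg r gts \<and> map fst (mk r gts) = w \<and> (b \<longrightarrow> isleaf (last gts))
       \<and> tob r = p \<and> map dec (filter (\<lambda>g. \<not> isleaf g) gts) = q}"

lemma D_E_bij: "bij_betw (\<lambda>(s, c). (cutR c s, ecut c s)) (Dset b w p q) (Eset b w p q)"
proof (rule bij_betw_byWitness[where f'="\<lambda>(r, gts). (graft r gts, cutset r gts)"])
  show "\<forall>a\<in>Dset b w p q. (\<lambda>(r, gts). (graft r gts, cutset r gts)) ((\<lambda>(s, c). (cutR c s, ecut c s)) a) = a"
    by (auto simp: Dset_def graft_ecut cutset_ecut)
  show "\<forall>a\<in>Eset b w p q. (\<lambda>(s, c). (cutR c s, ecut c s)) ((\<lambda>(r, gts). (graft r gts, cutset r gts)) a) = a"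
    by (auto simp: Eset_def G_cutR G_ecut)
  show "(\<lambda>(s, c). (cutR c s, ecut c s)) ` Dset b w p q \<subseteq> Eset b w p q"
  proof
    fix y assume "y \<in> (\<lambda>(s, c). (cutR c s, ecut c s)) ` Dset b w p q"
    then obtain s c where y: "y = (cutR c s, ecut c s)" and D: "(s, c) \<in> Dset b w p q" by auto
    from D have s: "wf s" "reading s = w" "adm s c" "b \<longrightarrow> condR s c" "tob (cutR c s) = p"
      "map dec (cutP c s) = q" by (auto simp: Dset_def)
    have g: "goodg (cutR c s) (ecut c s)"
      using ecut_wf[OF s(1), of c] ecut_len[of c s] by (simp add: goodg_def)
    have "map fst (mk (cutR c s) (ecut c s)) = w"
      using G_mk[OF g] graft_ecut[of c s] s(2) by simp
    moreover have "b \<longrightarrow> isleaf (last (ecut c s))" using s(3,4) condR_ecut by blast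
    moreover have "map dec (filter (\<lambda>g. \<not> isleaf g) (ecut c s)) = q" using s(3,6) cutP_ecut by metis
    ultimately show "y \<in> Eset b w p q" using y g s(5) by (simp add: Eset_def)
  qed
  show "(\<lambda>(r, gts). (graft r gts, cutset r gts)) ` Eset b w p q \<subseteq> Dset b w p q"
  proof
    fix y assume "y \<in> (\<lambda>(r, gts). (graft r gts, cutset r gts)) ` Eset b w p q"
    then obtain r gts where y: "y = (graft r gts, cutset r gts)" and E: "(r, gts) \<in> Eset b w p q" by auto
    from E have e: "goodg r gts" "map fst (mk r gts) = w" "b \<longrightarrow> isleaf (last gts)" "tob r = p"
      "map dec (filter (\<lambda>g. \<not> isleaf g) gts) = q" by (auto simp: Eset_def)
    have a: "adm (graft r gts) (cutset r gts)" using G_adm[OF e(1)] .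
    have "wf (graft r gts)" using G_wf[OF e(1)] .
    moreover have "reading (graft r gts) = w" using G_mk[OF e(1)] e(2) by simp
    moreover have "b \<longrightarrow> condR (graft r gts) (cutset r gts)"
      using condR_ecut[OF a] G_ecut[OF e(1)] e(3) by simp
    moreover have "tob (cutR (cutset r gts) (graft r gts)) = p" using G_cutR[OF e(1)] e(4) by simp
    moreover have "map dec (cutP (cutset r gts) (graft r gts)) = q"
      using cutP_ecut[OF a] G_ecut[OF e(1)] e(5) by simp
    ultimately show "y \<in> Dset b w p q" using y a by (simp add: Dset_def)
  qed
qed


definition Sset :: "bool \<Rightarrow> 'a list \<Rightarrow> nat set set" where
  "Sset b w = {S. S \<subseteq> {..<length w} \<and> (b \<longrightarrow> length w - 1 \<in> S)}"

definition Aset :: "'a list \<Rightarrow> 'a dtree list \<Rightarrow> 'a stree set" where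
  "Aset u p = {r. wf r \<and> reading r = u \<and> tob r = p}"

lemma Aset_card: "finite (Aset u p) \<and> card (Aset u p) = iota (if u = [] then [] else [u]) p"
proof (cases "u = []")
  case True
  then show ?thesis using L0_leaf[of p] by (simp add: Aset_def iota_Nil)
next
  case False
  have "Aset u p = {r. wf r \<and> reading r = u \<and> [dec r] = p}"
    using wf_tob False by (auto simp: Aset_def)
  then show ?thesis using L0[of u p] False by (simp add: iota_single)
qed

lemma isleaf_last: "\<forall>g\<in>set gts. wf g \<Longrightarrow> gts \<noteq> [] \<Longrightarrow> isleaf (last gts) = (last (map reading gts) = [])"
proof -
  assume a: "\<forall>g\<in>set gts. wf g" "gts \<noteq> []"
  then have wl: "wf (last gts)" by simp
  have "last (map reading gts) = reading (last gts)" using a by (simp add: last_map)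
  then show ?thesis using wf_reading_nil[OF wl] by simp
qed

lemma list_all2_reading: "list_all2 (\<lambda>g u. wf g \<and> reading g = u) gts gs \<longleftrightarrow> (\<forall>g\<in>set gts. wf g) \<and> map reading gts = gs"
proof
  assume a: "list_all2 (\<lambda>g u. wf g \<and> reading g = u) gts gs"
  then have "length gts = length gs" by (rule list_all2_lengthD)
  then show "(\<forall>g\<in>set gts. wf g) \<and> map reading gts = gs"
    using a by (auto simp: list_all2_conv_all_nth in_set_conv_nth intro: nth_equalityI)
next
  assume "(\<forall>g\<in>set gts. wf g) \<and> map reading gts = gs"
  then show "list_all2 (\<lambda>g u. wf g \<and> reading g = u) gts gs"
    by (auto simp: list_all2_conv_all_nth)
qed

lemma Fib_eq:
  assumes w: "w \<noteq> []" and S: "S \<in> Sset b w"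
  shows "{x \<in> Eset b w p q. mk (fst x) (snd x) = mskr S 0 w}
     = Aset (Rm (mskr S 0 w)) p \<times> Bset (gaps (mskr S 0 w)) q"
proof
  let ?m = "mskr S 0 w"
  show "{x \<in> Eset b w p q. mk (fst x) (snd x) = ?m} \<subseteq> Aset (Rm ?m) p \<times> Bset (gaps ?m) q"
  proof
    fix x assume "x \<in> {x \<in> Eset b w p q. mk (fst x) (snd x) = ?m}"
    then obtain r gts where x: "x = (r, gts)" "goodg r gts" "mk r gts = ?m" "tob r = p"
      "map dec (filter (\<lambda>g. \<not> isleaf g) gts) = q" by (auto simp: Eset_def)
    have "Rm ?m = reading r" "gaps ?m = map reading gts" using G_mk[OF x(2)] x(3) by auto
    then show "x \<in> Aset (Rm ?m) p \<times> Bset (gaps ?m) q"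
      using x by (auto simp: Aset_def Bset_def goodg_def list_all2_reading)
  qed
  show "Aset (Rm ?m) p \<times> Bset (gaps ?m) q \<subseteq> {x \<in> Eset b w p q. mk (fst x) (snd x) = ?m}"
  proof
    fix x assume "x \<in> Aset (Rm ?m) p \<times> Bset (gaps ?m) q"
    then obtain r gts where x: "x = (r, gts)" "wf r" "reading r = Rm ?m" "tob r = p"
      "\<forall>g\<in>set gts. wf g" "map reading gts = gaps ?m" "map dec (filter (\<lambda>g. \<not> isleaf g) gts) = q"
      by (auto simp: Aset_def Bset_def list_all2_reading)
    have "length gts = length (gaps ?m)" using x(6) by (metis length_map)
    then have lg: "length gts = Suc (length (Rm ?m))" by (simp add: length_gaps)
    then have "length gts = nlv r" using wf_len[OF x(2)] x(3) by simp
    then have g: "goodg r gts" using x by (simp add: goodg_def)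
    have mk: "mk r gts = ?m" using G_mk[OF g] x(3,6) gaps_Rm_inj by metis
    have mne: "?m \<noteq> []" using w by (metis mskr_len length_0_conv)
    have gne: "gts \<noteq> []" using lg by auto
    have "b \<longrightarrow> isleaf (last gts)"
    proof
      assume b
      then have "length w - 1 \<in> S" using S by (simp add: Sset_def)
      then have "snd (last ?m)" using mskr_last[OF w] by simp
      then have "last (gaps ?m) = []" using gaps_last[OF mne] by simp
      then show "isleaf (last gts)" using isleaf_last[OF x(5) gne] x(6) by simp
    qed
    then have "(r, gts) \<in> Eset b w p q" using g mk x by (simp add: Eset_def)
    then show "x \<in> {x \<in> Eset b w p q. mk (fst x) (snd x) = ?m}" using x mk by simp
  qed
qed

lemma E_Union:
  assumes w: "w \<noteq> []"
  shows "Eset b w p q = (\<Union>S\<in>Sset b w. {x \<in> Eset b w p q. mk (fst x) (snd x) = mskr S 0 w})"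
proof
  show "Eset b w p q \<subseteq> (\<Union>S\<in>Sset b w. {x \<in> Eset b w p q. mk (fst x) (snd x) = mskr S 0 w})"
  proof
    fix x assume xE: "x \<in> Eset b w p q"
    then obtain r gts where x: "x = (r, gts)" "goodg r gts" "map fst (mk r gts) = w" "b \<longrightarrow> isleaf (last gts)"
      by (auto simp: Eset_def)
    define S where "S = {j. j < length w \<and> snd (mk r gts ! j)}"
    have m: "mk r gts = mskr S 0 w" using mskr_of[OF x(3)] by (simp add: S_def)
    have "b \<longrightarrow> length w - 1 \<in> S"
    proof
      assume b
      then have il: "isleaf (last gts)" using x by simp
      have gw: "\<forall>g\<in>set gts. wf g" using x(2) by (simp add: goodg_def)
      have gne: "gts \<noteq> []" using x(2) nlv_pos[of r] by (auto simp: goodg_def)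
      have "gaps (mk r gts) = map reading gts" using G_mk[OF x(2)] by simp
      then have "last (gaps (mk r gts)) = []" using isleaf_last[OF gw gne] il by simp
      moreover have "mk r gts \<noteq> []" using x(3) w by auto
      ultimately have "snd (last (mk r gts))" using gaps_last by blast
      then show "length w - 1 \<in> S" using m mskr_last[OF w] by simp
    qed
    moreover have "S \<subseteq> {..<length w}" by (auto simp: S_def)
    ultimately have SS: "S \<in> Sset b w" by (simp add: Sset_def)
    have "x \<in> {x \<in> Eset b w p q. mk (fst x) (snd x) = mskr S 0 w}" using xE m x(1) by simp
    then show "x \<in> (\<Union>S\<in>Sset b w. {x \<in> Eset b w p q. mk (fst x) (snd x) = mskr S 0 w})"
      using SS by blast
  qed
qed auto

lemma Sset_finite: "finite (Sset b w)"
  by (rule finite_subset[of _ "Pow {..<length w}"]) (auto simp: Sset_def)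

lemma E_card:
  assumes w: "w \<noteq> []"
  shows "finite (Eset b w p q) \<and> of_nat (card (Eset b w p q)) = (\<Sum>S\<in>Sset b w. iota (Rw S w) p * iota (Pw S w) q)"
proof -
  define F where "F S = {x \<in> Eset b w p q. mk (fst x) (snd x) = mskr S 0 w}" for S
  have FS: "\<And>S. S \<in> Sset b w \<Longrightarrow> finite (F S) \<and> card (F S) = iota (Rw S w) p * iota (Pw S w) q"
  proof -
    fix S assume S: "S \<in> Sset b w"
    have e: "F S = Aset (Rm (mskr S 0 w)) p \<times> Bset (gaps (mskr S 0 w)) q"
      using Fib_eq[OF w S] by (simp add: F_def)
    have A: "finite (Aset (Rm (mskr S 0 w)) p)" "card (Aset (Rm (mskr S 0 w)) p) = iota (Rw S w) p"
      using Aset_card[of "Rm (mskr S 0 w)" p] by (simp_all add: Rw_msk)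
    have B: "finite (Bset (gaps (mskr S 0 w)) q)" "card (Bset (gaps (mskr S 0 w)) q) = iota (Pw S w) q"
      using Bset_card[of "gaps (mskr S 0 w)" q] by (simp_all add: Pw_msk)
    show "finite (F S) \<and> card (F S) = iota (Rw S w) p * iota (Pw S w) q"
      unfolding e using A B by (simp add: card_cartesian_product)
  qed
  have U: "Eset b w p q = (\<Union>S\<in>Sset b w. F S)" using E_Union[OF w] by (simp add: F_def)
  have disj: "\<forall>S\<in>Sset b w. \<forall>S'\<in>Sset b w. S \<noteq> S' \<longrightarrow> F S \<inter> F S' = {}"
  proof (intro ballI impI)
    fix S S' assume SS: "S \<in> Sset b w" "S' \<in> Sset b w" "S \<noteq> S'"
    have "mskr S 0 w \<noteq> mskr S' 0 w"
    proof
      assume "mskr S 0 w = mskr S' 0 w"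
      then have eq: "{j. j < length w \<and> snd (mskr S 0 w ! j)} = {j. j < length w \<and> snd (mskr S' 0 w ! j)}" by simp
      have s1: "S \<subseteq> {..<length w}" "S' \<subseteq> {..<length w}" using SS by (simp_all add: Sset_def)
      have "S = S'" using eq unfolding mskr_set[OF s1(1)] mskr_set[OF s1(2)] .
      then show False using SS by simp
    qed
    then show "F S \<inter> F S' = {}" by (auto simp: F_def)
  qed
  have c: "card (Eset b w p q) = (\<Sum>S\<in>Sset b w. card (F S))"
    unfolding U using Sset_finite FS disj by (intro card_UN_disjoint) auto
  have "of_nat (card (Eset b w p q)) = (\<Sum>S\<in>Sset b w. (of_nat (card (F S)) :: complex))"
    unfolding c by (rule of_nat_sum)
  also have "\<dots> = (\<Sum>S\<in>Sset b w. iota (Rw S w) p * iota (Pw S w) q)"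
    using FS by (intro sum.cong) auto
  finally have "of_nat (card (Eset b w p q)) = (\<Sum>S\<in>Sset b w. iota (Rw S w) p * iota (Pw S w) q)" .
  moreover have "finite (Eset b w p q)" unfolding U using FS Sset_finite by auto
  ultimately show ?thesis by simp
qed

lemma D_card:
  assumes w: "w \<noteq> []"
  shows "finite (Dset b w p q) \<and> of_nat (card (Dset b w p q)) = (\<Sum>S\<in>Sset b w. iota (Rw S w) p * iota (Pw S w) q)"
proof -
  have "card (Dset b w p q) = card (Eset b w p q)" using D_E_bij by (rule bij_betw_same_card)
  moreover have "finite (Dset b w p q)" using D_E_bij E_card[OF w] bij_betw_finite by blast
  ultimately show ?thesis using E_card[OF w] by simp
qed


definition spt :: "('b \<Rightarrow> complex) \<Rightarrow> 'b set" where "spt x = {b. x b \<noteq> 0}"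
definition dlt :: "'b \<Rightarrow> 'b \<Rightarrow> complex" where "dlt a = (\<lambda>c. if c = a then 1 else 0)"

lemma sum_single': "finite A \<Longrightarrow> a \<in> A \<Longrightarrow> (\<And>i. i \<in> A \<Longrightarrow> i \<noteq> a \<Longrightarrow> f i = 0) \<Longrightarrow> sum f A = f a"
proof -
  assume "finite A" "a \<in> A" and z: "\<And>i. i \<in> A \<Longrightarrow> i \<noteq> a \<Longrightarrow> f i = 0"
  then have "sum f A = f a + sum f (A - {a})" by (simp add: sum.remove)
  moreover have "sum f (A - {a}) = 0" using z by (intro sum.neutral) auto
  ultimately show ?thesis by simp
qed

lemma lin_superset: "finite Y \<Longrightarrow> spt x \<subseteq> Y \<Longrightarrow> lin f x = (\<lambda>c. \<Sum>b\<in>Y. x b * f b c)"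
proof (rule ext)
  fix c assume Y: "finite Y" "spt x \<subseteq> Y"
  have "lin f x c = (\<Sum>b\<in>spt x. x b * f b c)" by (simp add: lin_def spt_def)
  also have "\<dots> = (\<Sum>b\<in>Y. x b * f b c)"
    using Y by (intro sum.mono_neutral_left) (auto simp: spt_def)
  finally show "lin f x c = (\<Sum>b\<in>Y. x b * f b c)" .
qed

lemma spt_sum: "finite K \<Longrightarrow> spt (\<lambda>c. \<Sum>k\<in>K. x k c) \<subseteq> (\<Union>k\<in>K. spt (x k))"
proof
  fix c assume K: "finite K" and "c \<in> spt (\<lambda>c. \<Sum>k\<in>K. x k c)"
  then have "(\<Sum>k\<in>K. x k c) \<noteq> 0" by (simp add: spt_def)
  then obtain k where "k \<in> K" "x k c \<noteq> 0" by (meson sum.neutral)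
  then show "c \<in> (\<Union>k\<in>K. spt (x k))" by (auto simp: spt_def)
qed

lemma lin_add: "finite (spt x) \<Longrightarrow> finite (spt y) \<Longrightarrow> lin f (\<lambda>c. x c + y c) = (\<lambda>d. lin f x d + lin f y d)"
proof -
  assume fx: "finite (spt x)" and fy: "finite (spt y)"
  let ?Y = "spt x \<union> spt y"
  have "spt (\<lambda>c. x c + y c) \<subseteq> ?Y" by (auto simp: spt_def)
  then have 1: "lin f (\<lambda>c. x c + y c) = (\<lambda>d. \<Sum>b\<in>?Y. (x b + y b) * f b d)" using fx fy by (intro lin_superset) auto
  have 2: "lin f x = (\<lambda>d. \<Sum>b\<in>?Y. x b * f b d)" using fx fy by (intro lin_superset) auto
  have 3: "lin f y = (\<lambda>d. \<Sum>b\<in>?Y. y b * f b d)" using fx fy by (intro lin_superset) auto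
  show ?thesis unfolding 1 2 3 by (simp add: distrib_right sum.distrib)
qed

lemma lin_diff: "finite (spt x) \<Longrightarrow> finite (spt y) \<Longrightarrow> lin f (\<lambda>c. x c - y c) = (\<lambda>d. lin f x d - lin f y d)"
proof -
  assume fx: "finite (spt x)" and fy: "finite (spt y)"
  let ?Y = "spt x \<union> spt y"
  have "spt (\<lambda>c. x c - y c) \<subseteq> ?Y" by (auto simp: spt_def)
  then have 1: "lin f (\<lambda>c. x c - y c) = (\<lambda>d. \<Sum>b\<in>?Y. (x b - y b) * f b d)" using fx fy by (intro lin_superset) auto
  have 2: "lin f x = (\<lambda>d. \<Sum>b\<in>?Y. x b * f b d)" using fx fy by (intro lin_superset) auto
  have 3: "lin f y = (\<lambda>d. \<Sum>b\<in>?Y. y b * f b d)" using fx fy by (intro lin_superset) auto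
  show ?thesis unfolding 1 2 3 by (simp add: left_diff_distrib sum_subtractf)
qed

lemma lin_dlt: "lin f (\<lambda>c. \<alpha> * dlt a c) = (\<lambda>d. \<alpha> * f a d)"
proof -
  have "spt (\<lambda>c. \<alpha> * dlt a c) \<subseteq> {a}" by (auto simp: spt_def dlt_def)
  then have "lin f (\<lambda>c. \<alpha> * dlt a c) = (\<lambda>d. \<Sum>b\<in>{a}. \<alpha> * dlt a b * f b d)" by (intro lin_superset) auto
  then show ?thesis by (simp add: dlt_def)
qed

lemma lin_dlt1: "lin f (dlt a) = f a"
  using lin_dlt[of f 1 a] by simp

lemma spt_dlt_fin: "finite (spt (\<lambda>c. \<alpha> * dlt a c))"
  by (rule finite_subset[of _ "{a}"]) (auto simp: spt_def dlt_def)

lemma lin_comb: "finite K \<Longrightarrow> lin f (\<lambda>c. \<Sum>k\<in>K. \<alpha> k * dlt (\<phi> k) c) = (\<lambda>d. \<Sum>k\<in>K. \<alpha> k * f (\<phi> k) d)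
   \<and> finite (spt (\<lambda>c. \<Sum>k\<in>K. \<alpha> k * dlt (\<phi> k) c))"
proof (induction K rule: finite_induct)
  case empty
  have "lin f (\<lambda>c. \<Sum>k\<in>{}. \<alpha> k * dlt (\<phi> k) c) = (\<lambda>d. \<Sum>k\<in>{}. \<alpha> k * f (\<phi> k) d)"
    unfolding lin_def by simp
  moreover have "spt (\<lambda>c. \<Sum>k\<in>{}. \<alpha> k * dlt (\<phi> k) c) = {}" unfolding spt_def by simp
  ultimately show ?case by simp
next
  case (insert k K)
  define X where "X = (\<lambda>c. \<Sum>k\<in>K. \<alpha> k * dlt (\<phi> k) c)"
  define D where "D = (\<lambda>c. \<alpha> k * dlt (\<phi> k) c)"
  have e: "(\<lambda>c. \<Sum>k\<in>insert k K. \<alpha> k * dlt (\<phi> k) c) = (\<lambda>c. D c + X c)"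
    unfolding X_def D_def using insert.hyps by (simp add: sum.insert)
  have fX: "finite (spt X)" using insert.IH by (simp add: X_def)
  have fD: "finite (spt D)" unfolding D_def by (rule spt_dlt_fin)
  have l: "lin f (\<lambda>c. D c + X c) = (\<lambda>d. lin f D d + lin f X d)" by (rule lin_add[OF fD fX])
  have lD: "lin f D = (\<lambda>d. \<alpha> k * f (\<phi> k) d)" unfolding D_def by (rule lin_dlt)
  have lX: "lin f X = (\<lambda>d. \<Sum>k\<in>K. \<alpha> k * f (\<phi> k) d)" using insert.IH by (simp add: X_def)
  have s: "(\<lambda>d. \<Sum>k\<in>insert k K. \<alpha> k * f (\<phi> k) d) = (\<lambda>d. \<alpha> k * f (\<phi> k) d + (\<Sum>k\<in>K. \<alpha> k * f (\<phi> k) d))"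
    using insert.hyps by (simp add: sum.insert)
  have "spt (\<lambda>c. D c + X c) \<subseteq> spt D \<union> spt X" by (auto simp: spt_def)
  then have fin: "finite (spt (\<lambda>c. D c + X c))" using fD fX by (meson finite_UnI finite_subset)
  show ?case unfolding e s l lD lX using fin by simp
qed

lemma lin_cong: "(\<And>b. x b \<noteq> 0 \<Longrightarrow> f b = g b) \<Longrightarrow> lin f x = lin g x"
  by (simp add: lin_def)

lemma lin_lin:
  assumes fx: "finite (spt x)" and fg: "\<And>b. x b \<noteq> 0 \<Longrightarrow> finite (spt (g b))"
  shows "lin f (lin g x) = lin (\<lambda>b. lin f (g b)) x"
proof -
  let ?X = "spt x"
  let ?Y = "\<Union>b\<in>?X. spt (g b)"
  have fY: "finite ?Y" using fx fg by (auto simp: spt_def)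
  have lg: "lin g x = (\<lambda>c. \<Sum>b\<in>?X. x b * g b c)" using fx by (intro lin_superset) auto
  have sY: "spt (lin g x) \<subseteq> ?Y"
  proof
    fix c assume "c \<in> spt (lin g x)"
    then have "(\<Sum>b\<in>?X. x b * g b c) \<noteq> 0" using lg by (simp add: spt_def)
    then obtain b where "b \<in> ?X" "x b * g b c \<noteq> 0" by (meson sum.neutral)
    then show "c \<in> ?Y" by (auto simp: spt_def)
  qed
  have "lin f (lin g x) = (\<lambda>d. \<Sum>c\<in>?Y. lin g x c * f c d)" using fY sY by (rule lin_superset)
  also have "\<dots> = (\<lambda>d. \<Sum>c\<in>?Y. \<Sum>b\<in>?X. x b * g b c * f c d)" unfolding lg by (simp add: sum_distrib_right)
  also have "\<dots> = (\<lambda>d. \<Sum>b\<in>?X. x b * (\<Sum>c\<in>?Y. g b c * f c d))"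
    by (rule ext, subst sum.swap) (simp add: sum_distrib_left mult.assoc)
  also have "\<dots> = (\<lambda>d. \<Sum>b\<in>?X. x b * lin f (g b) d)"
  proof (rule ext, rule sum.cong)
    fix d b assume b: "b \<in> ?X"
    have "lin f (g b) = (\<lambda>d. \<Sum>c\<in>?Y. g b c * f c d)" using fY b by (intro lin_superset) auto
    then show "x b * (\<Sum>c\<in>?Y. g b c * f c d) = x b * lin f (g b) d" by simp
  qed simp
  also have "\<dots> = lin (\<lambda>b. lin f (g b)) x" using fx by (intro lin_superset[symmetric]) auto
  finally show ?thesis .
qed

lemma tmult_add_left: "tmult (\<lambda>e. f1 e + f2 e) g = (\<lambda>d. tmult f1 g d + tmult f2 g d)"
  by (auto simp: tmult_def distrib_right sum.distrib)

lemma tmult_add_right: "tmult g (\<lambda>e. f1 e + f2 e) = (\<lambda>d. tmult g f1 d + tmult g f2 d)"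
  by (auto simp: tmult_def distrib_left sum.distrib)

lemma tmult_zero_left: "tmult (\<lambda>e. 0) g = (\<lambda>d. 0)"
  by (auto simp: tmult_def)

lemma tmult_zero_right: "tmult g (\<lambda>e. 0) = (\<lambda>d. 0)"
  by (auto simp: tmult_def)

lemma tmult_scal_left: "tmult (\<lambda>e. \<alpha> * f e) g = (\<lambda>d. \<alpha> * tmult f g d)"
  by (auto simp: tmult_def sum_distrib_left mult.assoc)

lemma tmult_scal_right: "tmult g (\<lambda>e. \<alpha> * f e) = (\<lambda>d. \<alpha> * tmult g f d)"
  by (auto simp: tmult_def sum_distrib_left mult.left_commute)

lemma tmult_sum_left: "finite K \<Longrightarrow> tmult (\<lambda>e. \<Sum>k\<in>K. f k e) g = (\<lambda>d. \<Sum>k\<in>K. tmult (f k) g d)"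
proof (induction K rule: finite_induct)
  case empty then show ?case by (simp add: tmult_zero_left)
next
  case (insert k K)
  then show ?case by (simp add: tmult_add_left)
qed

lemma tmult_sum_right: "finite K \<Longrightarrow> tmult g (\<lambda>e. \<Sum>k\<in>K. f k e) = (\<lambda>d. \<Sum>k\<in>K. tmult g (f k) d)"
proof (induction K rule: finite_induct)
  case empty then show ?case by (simp add: tmult_zero_right)
next
  case (insert k K)
  then show ?case by (simp add: tmult_add_right)
qed


lemma splits_bij: "bij_betw (\<lambda>i. (take i c, drop i c)) {..length c} {z. fst z @ snd z = c}"
proof (rule bij_betw_byWitness[where f'="\<lambda>z. length (fst z)"])
  show "(\<lambda>i. (take i c, drop i c)) ` {..length c} \<subseteq> {z. fst z @ snd z = c}" by auto
  show "(\<lambda>z. length (fst z)) ` {z. fst z @ snd z = c} \<subseteq> {..length c}" by auto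
  show "\<forall>x\<in>{..length c}. length (fst (take x c, drop x c)) = x" by auto
  show "\<forall>z\<in>{z. fst z @ snd z = c}. (take (length (fst z)) c, drop (length (fst z)) c) = z"
  proof
    fix z assume "z \<in> {z. fst z @ snd z = c}"
    then have "fst z @ snd z = c" by simp
    then show "(take (length (fst z)) c, drop (length (fst z)) c) = z" by (metis append_eq_conv_conj prod.collapse)
  qed
qed

lemma splits_finite: "finite {z. fst z @ snd z = (c::'b list)}"
  using bij_betw_finite[OF splits_bij[of c]] by simp

lemma vmult_splits: "vmult a b c = (\<Sum>z\<in>{z. fst z @ snd z = c}. a (fst z) * b (snd z))"
  unfolding vmult_def using sum.reindex_bij_betw[OF splits_bij[of c], of "\<lambda>z. a (fst z) * b (snd z)"] by simp

lemma GQ: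
  assumes "finite SX" "finite SY" "spt X \<subseteq> SX" "spt Y \<subseteq> SY" "finite Q"
  shows "(\<Sum>z\<in>Q. X (fst z) * Y (snd z)) = (\<Sum>z\<in>SX \<times> SY. X (fst z) * Y (snd z) * (if z \<in> Q then 1 else 0))"
proof -
  have "(\<Sum>z\<in>Q. X (fst z) * Y (snd z)) = (\<Sum>z\<in>Q \<inter> (SX \<times> SY). X (fst z) * Y (snd z))"
    using assms by (intro sum.mono_neutral_right) (auto simp: spt_def)
  also have "\<dots> = (\<Sum>z\<in>{z \<in> SX \<times> SY. z \<in> Q}. X (fst z) * Y (snd z))"
    by (rule sum.cong) auto
  also have "\<dots> = (\<Sum>z\<in>SX \<times> SY. if z \<in> Q then X (fst z) * Y (snd z) else 0)"
    using assms by (intro sum.inter_filter) auto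
  also have "\<dots> = (\<Sum>z\<in>SX \<times> SY. X (fst z) * Y (snd z) * (if z \<in> Q then 1 else 0))"
    by (rule sum.cong) auto
  finally show ?thesis .
qed

lemma vmult_expand:
  assumes "finite A" "finite B" "spt a \<subseteq> A" "spt b \<subseteq> B"
  shows "vmult a b = (\<lambda>c. \<Sum>z\<in>A \<times> B. (a (fst z) * b (snd z)) * dlt (fst z @ snd z) c)"
proof
  fix c
  have "vmult a b c = (\<Sum>z\<in>A \<times> B. a (fst z) * b (snd z) * (if z \<in> {z. fst z @ snd z = c} then 1 else 0))"
    unfolding vmult_splits using assms splits_finite by (intro GQ) auto
  also have "\<dots> = (\<Sum>z\<in>A \<times> B. (a (fst z) * b (snd z)) * dlt (fst z @ snd z) c)"
    by (rule sum.cong) (auto simp: dlt_def)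
  finally show "vmult a b c = (\<Sum>z\<in>A \<times> B. (a (fst z) * b (snd z)) * dlt (fst z @ snd z) c)" .
qed

lemma tsplits_bij: "bij_betw (\<lambda>(i, j). ((take i c, take j d), (drop i c, drop j d))) ({..length c} \<times> {..length d})
   {z. fst (fst z) @ fst (snd z) = c \<and> snd (fst z) @ snd (snd z) = d}"
proof (rule bij_betw_byWitness[where f'="\<lambda>z. (length (fst (fst z)), length (snd (fst z)))"])
  show "(\<lambda>(i, j). ((take i c, take j d), (drop i c, drop j d))) ` ({..length c} \<times> {..length d}) \<subseteq>
     {z. fst (fst z) @ fst (snd z) = c \<and> snd (fst z) @ snd (snd z) = d}" by auto
  show "(\<lambda>z. (length (fst (fst z)), length (snd (fst z)))) ` {z. fst (fst z) @ fst (snd z) = c \<and> snd (fst z) @ snd (snd z) = d}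
     \<subseteq> {..length c} \<times> {..length d}" by auto
  show "\<forall>x\<in>{..length c} \<times> {..length d}.
     (\<lambda>z. (length (fst (fst z)), length (snd (fst z)))) ((\<lambda>(i, j). ((take i c, take j d), (drop i c, drop j d))) x) = x"
    by auto
  show "\<forall>z\<in>{z. fst (fst z) @ fst (snd z) = c \<and> snd (fst z) @ snd (snd z) = d}.
     (\<lambda>(i, j). ((take i c, take j d), (drop i c, drop j d))) ((\<lambda>z. (length (fst (fst z)), length (snd (fst z)))) z) = z"
  proof
    fix z assume "z \<in> {z. fst (fst z) @ fst (snd z) = c \<and> snd (fst z) @ snd (snd z) = d}"
    then have h: "fst (fst z) @ fst (snd z) = c" "snd (fst z) @ snd (snd z) = d" by auto
    obtain u1 v1 u2 v2 where z: "z = ((u1, v1), (u2, v2))" by (metis prod.collapse)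
    show "(\<lambda>(i, j). ((take i c, take j d), (drop i c, drop j d))) ((\<lambda>z. (length (fst (fst z)), length (snd (fst z)))) z) = z"
      using h z by auto
  qed
qed

lemma tsplits_finite: "finite {z. fst (fst z) @ fst (snd z) = (c::'b list) \<and> snd (fst z) @ snd (snd z) = (d::'c list)}"
  using bij_betw_finite[OF tsplits_bij[of c d]] by simp

lemma tmult_splits: "tmult X Y (c, d) = (\<Sum>z\<in>{z. fst (fst z) @ fst (snd z) = c \<and> snd (fst z) @ snd (snd z) = d}. X (fst z) * Y (snd z))"
proof -
  have "tmult X Y (c, d) = (\<Sum>ij\<in>{..length c} \<times> {..length d}. X (take (fst ij) c, take (snd ij) d) * Y (drop (fst ij) c, drop (snd ij) d))"
    by (simp add: tmult_def sum.cartesian_product case_prod_beta)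
  also have "\<dots> = (\<Sum>z\<in>{z. fst (fst z) @ fst (snd z) = c \<and> snd (fst z) @ snd (snd z) = d}. X (fst z) * Y (snd z))"
    using sum.reindex_bij_betw[OF tsplits_bij[of c d], of "\<lambda>z. X (fst z) * Y (snd z)"]
    by (simp add: case_prod_beta)
  finally show ?thesis .
qed

lemma tmult_expand:
  assumes "finite A" "finite B" "spt X \<subseteq> A" "spt Y \<subseteq> B"
  shows "tmult X Y = (\<lambda>cd. \<Sum>z\<in>A \<times> B. (X (fst z) * Y (snd z)) * dlt (fst (fst z) @ fst (snd z), snd (fst z) @ snd (snd z)) cd)"
proof
  fix cd :: "'a list \<times> 'b list"
  obtain c d where cd: "cd = (c, d)" by (cases cd)
  have "tmult X Y (c, d) = (\<Sum>z\<in>A \<times> B. X (fst z) * Y (snd z) *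
      (if z \<in> {z. fst (fst z) @ fst (snd z) = c \<and> snd (fst z) @ snd (snd z) = d} then 1 else 0))"
    unfolding tmult_splits using assms tsplits_finite by (intro GQ) auto
  also have "\<dots> = (\<Sum>z\<in>A \<times> B. (X (fst z) * Y (snd z)) * dlt (fst (fst z) @ fst (snd z), snd (fst z) @ snd (snd z)) (c, d))"
    by (rule sum.cong) (auto simp: dlt_def)
  finally show "tmult X Y cd = (\<Sum>z\<in>A \<times> B. (X (fst z) * Y (snd z)) * dlt (fst (fst z) @ fst (snd z), snd (fst z) @ snd (snd z)) cd)"
    using cd by simp
qed


lemma vmult_spt: "finite (spt a) \<Longrightarrow> finite (spt b) \<Longrightarrow> finite (spt (vmult a b))"
proof -
  assume fa: "finite (spt a)" and fb: "finite (spt b)"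
  have e: "vmult a b = (\<lambda>c. \<Sum>z\<in>spt a \<times> spt b. (a (fst z) * b (snd z)) * dlt (fst z @ snd z) c)"
    using fa fb by (intro vmult_expand) auto
  have "spt (vmult a b) \<subseteq> (\<lambda>z. fst z @ snd z) ` (spt a \<times> spt b)"
  proof
    fix c assume "c \<in> spt (vmult a b)"
    then have "(\<Sum>z\<in>spt a \<times> spt b. (a (fst z) * b (snd z)) * dlt (fst z @ snd z) c) \<noteq> 0"
      unfolding e by (simp add: spt_def)
    then obtain z where "z \<in> spt a \<times> spt b" "(a (fst z) * b (snd z)) * dlt (fst z @ snd z) c \<noteq> 0"
      by (meson sum.neutral)
    then show "c \<in> (\<lambda>z. fst z @ snd z) ` (spt a \<times> spt b)" by (auto simp: dlt_def split: if_splits)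
  qed
  then show ?thesis using fa fb by (meson finite_SigmaI finite_imageI finite_subset)
qed

lemma tmult_spt: "finite (spt X) \<Longrightarrow> finite (spt Y) \<Longrightarrow> finite (spt (tmult X Y))"
proof -
  assume fa: "finite (spt X)" and fb: "finite (spt Y)"
  have e: "tmult X Y = (\<lambda>cd. \<Sum>z\<in>spt X \<times> spt Y. (X (fst z) * Y (snd z)) * dlt (fst (fst z) @ fst (snd z), snd (fst z) @ snd (snd z)) cd)"
    using fa fb by (intro tmult_expand) auto
  have "spt (tmult X Y) \<subseteq> (\<lambda>z. (fst (fst z) @ fst (snd z), snd (fst z) @ snd (snd z))) ` (spt X \<times> spt Y)"
  proof
    fix c assume "c \<in> spt (tmult X Y)"
    then have "(\<Sum>z\<in>spt X \<times> spt Y. (X (fst z) * Y (snd z)) * dlt (fst (fst z) @ fst (snd z), snd (fst z) @ snd (snd z)) c) \<noteq> 0"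
      unfolding e by (simp add: spt_def)
    then obtain z where "z \<in> spt X \<times> spt Y" "(X (fst z) * Y (snd z)) * dlt (fst (fst z) @ fst (snd z), snd (fst z) @ snd (snd z)) c \<noteq> 0"
      by (meson sum.neutral)
    then show "c \<in> (\<lambda>z. (fst (fst z) @ fst (snd z), snd (fst z) @ snd (snd z))) ` (spt X \<times> spt Y)"
      by (auto simp: dlt_def split: if_splits)
  qed
  then show ?thesis using fa fb by (meson finite_SigmaI finite_imageI finite_subset)
qed

lemma tmult_bilin:
  assumes "finite A" "finite B"
  shows "tmult (\<lambda>e. \<Sum>h1\<in>A. a h1 * F h1 e) (\<lambda>e. \<Sum>h2\<in>B. b h2 * G h2 e)
     = (\<lambda>d. \<Sum>z\<in>A \<times> B. a (fst z) * b (snd z) * tmult (F (fst z)) (G (snd z)) d)"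
proof -
  have "tmult (\<lambda>e. \<Sum>h1\<in>A. a h1 * F h1 e) (\<lambda>e. \<Sum>h2\<in>B. b h2 * G h2 e)
      = (\<lambda>d. \<Sum>h1\<in>A. tmult (\<lambda>e. a h1 * F h1 e) (\<lambda>e. \<Sum>h2\<in>B. b h2 * G h2 e) d)"
    using tmult_sum_left[OF assms(1), of "\<lambda>h1 e. a h1 * F h1 e"] by simp
  also have "\<dots> = (\<lambda>d. \<Sum>h1\<in>A. \<Sum>h2\<in>B. tmult (\<lambda>e. a h1 * F h1 e) (\<lambda>e. b h2 * G h2 e) d)"
    using tmult_sum_right[OF assms(2), of _ "\<lambda>h2 e. b h2 * G h2 e"] by simp
  also have "\<dots> = (\<lambda>d. \<Sum>h1\<in>A. \<Sum>h2\<in>B. a h1 * b h2 * tmult (F h1) (G h2) d)"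
    by (simp add: tmult_scal_left tmult_scal_right mult.assoc)
  also have "\<dots> = (\<lambda>d. \<Sum>z\<in>A \<times> B. a (fst z) * b (snd z) * tmult (F (fst z)) (G (snd z)) d)"
    by (simp add: sum.cartesian_product case_prod_beta)
  finally show ?thesis .
qed

lemma lin_vmult:
  assumes fa: "finite (spt a)" and fb: "finite (spt b)"
    and hyp: "\<And>h1 h2. a h1 \<noteq> 0 \<Longrightarrow> b h2 \<noteq> 0 \<Longrightarrow> F (h1 @ h2) = tmult (F h1) (F h2)"
  shows "lin F (vmult a b) = tmult (lin F a) (lin F b)"
proof -
  have e: "vmult a b = (\<lambda>c. \<Sum>z\<in>spt a \<times> spt b. (a (fst z) * b (snd z)) * dlt (fst z @ snd z) c)"
    using fa fb by (intro vmult_expand) auto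
  have "lin F (vmult a b) = (\<lambda>d. \<Sum>z\<in>spt a \<times> spt b. (a (fst z) * b (snd z)) * F (fst z @ snd z) d)"
    unfolding e using lin_comb[of "spt a \<times> spt b" F "\<lambda>z. a (fst z) * b (snd z)" "\<lambda>z. fst z @ snd z"] fa fb
    by simp
  also have "\<dots> = (\<lambda>d. \<Sum>z\<in>spt a \<times> spt b. a (fst z) * b (snd z) * tmult (F (fst z)) (F (snd z)) d)"
    using hyp by (intro ext sum.cong) (auto simp: spt_def)
  also have "\<dots> = tmult (\<lambda>e. \<Sum>h1\<in>spt a. a h1 * F h1 e) (\<lambda>e. \<Sum>h2\<in>spt b. b h2 * F h2 e)"
    using fa fb by (intro tmult_bilin[symmetric])
  also have "\<dots> = tmult (lin F a) (lin F b)"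
    using lin_superset[OF fa, of a F] lin_superset[OF fb, of b F] by simp
  finally show ?thesis .
qed

lemma lin_tmult:
  assumes fa: "finite (spt X)" and fb: "finite (spt Y)"
    and hyp: "\<And>x y. X x \<noteq> 0 \<Longrightarrow> Y y \<noteq> 0 \<Longrightarrow> G (fst x @ fst y, snd x @ snd y) = tmult (G x) (G y)"
  shows "lin G (tmult X Y) = tmult (lin G X) (lin G Y)"
proof -
  have e: "tmult X Y = (\<lambda>cd. \<Sum>z\<in>spt X \<times> spt Y. (X (fst z) * Y (snd z)) * dlt (fst (fst z) @ fst (snd z), snd (fst z) @ snd (snd z)) cd)"
    using fa fb by (intro tmult_expand) auto
  have "lin G (tmult X Y) = (\<lambda>d. \<Sum>z\<in>spt X \<times> spt Y. (X (fst z) * Y (snd z)) * G (fst (fst z) @ fst (snd z), snd (fst z) @ snd (snd z)) d)"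
    unfolding e using lin_comb[of "spt X \<times> spt Y" G "\<lambda>z. X (fst z) * Y (snd z)"
        "\<lambda>z. (fst (fst z) @ fst (snd z), snd (fst z) @ snd (snd z))"] fa fb
    by simp
  also have "\<dots> = (\<lambda>d. \<Sum>z\<in>spt X \<times> spt Y. X (fst z) * Y (snd z) * tmult (G (fst z)) (G (snd z)) d)"
    using hyp by (intro ext sum.cong) (auto simp: spt_def)
  also have "\<dots> = tmult (\<lambda>e. \<Sum>h1\<in>spt X. X h1 * G h1 e) (\<lambda>e. \<Sum>h2\<in>spt Y. Y h2 * G h2 e)"
    using fa fb by (intro tmult_bilin[symmetric])
  also have "\<dots> = tmult (lin G X) (lin G Y)"
    using lin_superset[OF fa, of X G] lin_superset[OF fb, of Y G] by simp
  finally show ?thesis .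
qed


lemma sum_list_ge_len: "(\<And>x. 1 \<le> f x) \<Longrightarrow> length xs \<le> sum_list (map f xs)"
proof (induction xs)
  case (Cons a xs)
  show ?case using Cons.IH[OF Cons.prems] Cons.prems[of a] by simp
qed simp

lemma finite_red: "finite {T. reduced T \<and> leaves T \<le> k}"
proof (induction k)
  case 0
  have "\<And>T. \<not> (reduced T \<and> leaves T \<le> 0)"
  proof
    fix T assume "reduced T \<and> leaves T \<le> 0"
    then show False using leaves_pos[of T] by simp
  qed
  then have e: "{T. reduced T \<and> leaves T \<le> 0} = {}" by blast
  show ?case unfolding e by simp
next
  case (Suc k)
  let ?R = "{T. reduced T \<and> leaves T \<le> k}"
  have sub: "{T. reduced T \<and> leaves T \<le> Suc k} \<subseteq> insert (Nd []) (Nd ` {ts. set ts \<subseteq> ?R \<and> length ts \<le> Suc k})"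
  proof
    fix T assume T: "T \<in> {T. reduced T \<and> leaves T \<le> Suc k}"
    obtain ts where Tts: "T = Nd ts" by (cases T)
    show "T \<in> insert (Nd []) (Nd ` {ts. set ts \<subseteq> ?R \<and> length ts \<le> Suc k})"
    proof (cases "ts = []")
      case True then show ?thesis using Tts by simp
    next
      case False
      then have red: "2 \<le> length ts" "\<forall>t\<in>set ts. reduced t" using T Tts by auto
      have sl: "sum_list (map leaves ts) \<le> Suc k" using T Tts False by simp
      have "length ts \<le> sum_list (map leaves ts)" using leaves_pos by (rule sum_list_ge_len)
      then have len: "length ts \<le> Suc k" using sl by simp
      have "set ts \<subseteq> ?R"
      proof
        fix t assume t: "t \<in> set ts"
        have "sum_list (map leaves ts) = leaves t + sum_list (map leaves (remove1 t ts))"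
          using t by (rule sum_list_map_remove1)
        moreover have "length (remove1 t ts) \<le> sum_list (map leaves (remove1 t ts))"
          using leaves_pos by (rule sum_list_ge_len)
        moreover have "length (remove1 t ts) = length ts - 1" using t by (simp add: length_remove1)
        ultimately have "leaves t + 1 \<le> sum_list (map leaves ts)" using red by simp
        then show "t \<in> ?R" using sl red t by simp
      qed
      then show ?thesis using Tts len by blast
    qed
  qed
  have "finite {ts. set ts \<subseteq> ?R \<and> length ts \<le> Suc k}" using Suc by (rule finite_lists_length_le)
  then show ?case using sub by (meson finite_imageI finite_insert finite_subset)
qed

definition Tset :: "nat \<Rightarrow> ptree set" where "Tset k = {T. reduced T \<and> leaves T = k}"

lemma Tset_finite: "finite (Tset k)"
  by (rule finite_subset[OF _ finite_red[of k]]) (auto simp: Tset_def)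

lemma spt_iw: "spt (iota_word w) = (\<lambda>T. [(T, w)]) ` Tset (length w + 1)"
  by (auto simp: spt_def iota_word_def Tset_def)

lemma spt_iw_finite: "finite (spt (iota_word w))"
  unfolding spt_iw using Tset_finite by simp

lemma spt_vone: "finite (spt vone)"
  by (rule finite_subset[of _ "{[]}"]) (auto simp: spt_def vone_def)

lemma spt_tone: "finite (spt tone)"
  by (rule finite_subset[of _ "{([], [])}"]) (auto simp: spt_def tone_def split: if_splits)

lemma spt_iota: "finite (spt (iota ws))"
proof (induction ws)
  case Nil then show ?case by (simp add: iota_Nil spt_vone)
next
  case (Cons w ws) then show ?case by (simp add: iota_Cons vmult_spt spt_iw_finite)
qed

lemma spt_card_fin:
  assumes "finite A"
  shows "finite (spt (\<lambda>y. of_nat (card {S \<in> A. P S \<and> \<phi> S = y}) :: complex))"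
proof (rule finite_subset[of _ "\<phi> ` A"])
  show "spt (\<lambda>y. of_nat (card {S \<in> A. P S \<and> \<phi> S = y}) :: complex) \<subseteq> \<phi> ` A"
  proof
    fix y assume "y \<in> spt (\<lambda>y. of_nat (card {S \<in> A. P S \<and> \<phi> S = y}) :: complex)"
    then have "card {S \<in> A. P S \<and> \<phi> S = y} \<noteq> 0" by (simp add: spt_def)
    then obtain S where "S \<in> A" "\<phi> S = y" by (metis (mono_tags, lifting) card.empty empty_Collect_eq)
    then show "y \<in> \<phi> ` A" by blast
  qed
  show "finite (\<phi> ` A)" using assms by simp
qed

lemma DW_alt: "DW w = (\<lambda>y. of_nat (card {S \<in> Pow {..<length w}. True \<and> (Rw S w, Pw S w) = y}))"
  unfolding DW_def by (rule ext) (simp add: Pow_def)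

lemma DWplus_alt: "DWplus w = (\<lambda>y. of_nat (card {S \<in> Pow {..<length w}. length w - 1 \<in> S \<and> (Rw S w, Pw S w) = y}))"
  unfolding DWplus_def by (rule ext) (simp add: Pow_def conj_assoc)

lemma spt_DW: "finite (spt (DW w))"
  unfolding DW_alt by (rule spt_card_fin) simp

lemma spt_DWplus: "finite (spt (DWplus w))"
  unfolding DWplus_alt by (rule spt_card_fin) simp

lemma spt_DT: "finite (spt (DT ws))"
proof (induction ws)
  case Nil then show ?case by (simp add: DT_def spt_tone)
next
  case (Cons w ws) then show ?case by (simp add: DT_def tmult_spt spt_DW)
qed

lemma tmult_tone: "tmult x tone = x"
proof
  fix cd :: "'a list \<times> 'b list"
  obtain c d where cd: "cd = (c, d)" by (cases cd)
  have "tmult x tone (c, d) = (\<Sum>i\<le>length c. \<Sum>j\<le>length d. x (take i c, take j d) * tone (drop i c, drop j d))"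
    by (simp add: tmult_def)
  also have "\<dots> = (\<Sum>j\<le>length d. x (take (length c) c, take j d) * tone (drop (length c) c, drop j d))"
  proof (rule sum_single')
    fix i assume "i \<in> {..length c}" "i \<noteq> length c"
    then have "drop i c \<noteq> []" by simp
    then show "(\<Sum>j\<le>length d. x (take i c, take j d) * tone (drop i c, drop j d)) = 0" by (simp add: tone_def)
  qed auto
  also have "\<dots> = x (take (length c) c, take (length d) d) * tone (drop (length c) c, drop (length d) d)"
  proof (rule sum_single')
    fix j assume "j \<in> {..length d}" "j \<noteq> length d"
    then have "drop j d \<noteq> []" by simp
    then show "x (take (length c) c, take j d) * tone (drop (length c) c, drop j d) = 0" by (simp add: tone_def)
  qed auto
  also have "\<dots> = x (c, d)" by (simp add: tone_def)
  finally show "tmult x tone cd = x cd" using cd by simp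
qed

lemma DH_single: "DH [t] = DHtree t"
  by (simp add: DH_def tmult_tone)

lemma DH_Cons: "DH (t # h) = tmult (DHtree t) (DH h)"
  by (simp add: DH_def)

lemma vmult_vone_left: "vmult vone Y = Y"
proof
  fix q
  have "vmult vone Y q = (\<Sum>i\<le>length q. vone (take i q) * Y (drop i q))" by (simp add: vmult_def)
  also have "\<dots> = vone (take 0 q) * Y (drop 0 q)"
  proof (rule sum_single')
    fix i assume "i \<in> {..length q}" "i \<noteq> 0"
    then have "take i q \<noteq> []" by auto
    then show "vone (take i q) * Y (drop i q) = 0" by (simp add: vone_def)
  qed auto
  finally show "vmult vone Y q = Y q" by (simp add: vone_def)
qed

lemma vmult_assoc_iw: "vmult (vmult (iota_word u) A) B = vmult (iota_word u) (vmult A B)"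
proof
  fix q
  show "vmult (vmult (iota_word u) A) B q = vmult (iota_word u) (vmult A B) q"
  proof (cases q)
    case Nil
    then show ?thesis by (simp add: vmult_def vmult_iw)
  next
    case (Cons x q')
    have "vmult (vmult (iota_word u) A) B q = (\<Sum>i\<le>Suc (length q'). vmult (iota_word u) A (take i q) * B (drop i q))"
      using Cons by (simp add: vmult_def)
    also have "\<dots> = vmult (iota_word u) A (take 0 q) * B (drop 0 q) + (\<Sum>i\<le>length q'. vmult (iota_word u) A (take (Suc i) q) * B (drop (Suc i) q))"
      by (rule sum.atMost_Suc_shift)
    also have "\<dots> = (\<Sum>i\<le>length q'. iota_word u [x] * (A (take i q') * B (drop i q')))"
      using Cons by (simp add: vmult_iw mult.assoc)
    also have "\<dots> = iota_word u [x] * vmult A B q'" by (simp add: vmult_def sum_distrib_left)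
    also have "\<dots> = vmult (iota_word u) (vmult A B) q" using Cons by (simp add: vmult_iw)
    finally show ?thesis .
  qed
qed

lemma iota_append: "iota (u1 @ u2) = vmult (iota u1) (iota u2)"
proof (induction u1)
  case Nil then show ?case by (simp add: iota_Nil vmult_vone_left)
next
  case (Cons w u1) then show ?case by (simp add: iota_Cons vmult_assoc_iw)
qed

lemma iota2_append: "iota2 (u1 @ u2, v1 @ v2) = tmult (iota2 (u1, v1)) (iota2 (u2, v2))"
proof
  fix pq :: "'a dtree list \<times> 'a dtree list"
  obtain p q where pq: "pq = (p, q)" by (cases pq)
  have "iota2 (u1 @ u2, v1 @ v2) (p, q) = vmult (iota u1) (iota u2) p * vmult (iota v1) (iota v2) q"
    by (simp add: iota2_def iota_append)
  also have "\<dots> = (\<Sum>i\<le>length p. \<Sum>j\<le>length q. (iota u1 (take i p) * iota u2 (drop i p)) * (iota v1 (take j q) * iota v2 (drop j q)))"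
    by (simp add: vmult_def sum_product)
  also have "\<dots> = tmult (iota2 (u1, v1)) (iota2 (u2, v2)) (p, q)"
    by (simp add: tmult_def iota2_def mult_ac)
  finally show "iota2 (u1 @ u2, v1 @ v2) pq = tmult (iota2 (u1, v1)) (iota2 (u2, v2)) pq" using pq by simp
qed


lemma lin_card:
  assumes "finite A"
  shows "lin G (\<lambda>y. of_nat (card {S \<in> A. P S \<and> \<phi> S = y})) = (\<lambda>d. \<Sum>S\<in>{S \<in> A. P S}. G (\<phi> S) d)"
proof -
  let ?A = "{S \<in> A. P S}"
  have fA: "finite ?A" using assms by simp
  have sp: "spt (\<lambda>y. of_nat (card {S \<in> A. P S \<and> \<phi> S = y}) :: complex) \<subseteq> \<phi> ` ?A"
  proof
    fix y assume "y \<in> spt (\<lambda>y. of_nat (card {S \<in> A. P S \<and> \<phi> S = y}) :: complex)"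
    then have "card {S \<in> A. P S \<and> \<phi> S = y} \<noteq> 0" by (simp add: spt_def)
    then obtain S where "S \<in> A" "P S" "\<phi> S = y" by (metis (mono_tags, lifting) card.empty empty_Collect_eq)
    then show "y \<in> \<phi> ` ?A" by blast
  qed
  have "lin G (\<lambda>y. of_nat (card {S \<in> A. P S \<and> \<phi> S = y})) =
      (\<lambda>d. \<Sum>y\<in>\<phi> ` ?A. of_nat (card {S \<in> A. P S \<and> \<phi> S = y}) * G y d)"
    using fA sp by (intro lin_superset) auto
  also have "\<dots> = (\<lambda>d. \<Sum>S\<in>?A. G (\<phi> S) d)"
  proof
    fix d
    have "(\<Sum>S\<in>?A. G (\<phi> S) d) = (\<Sum>y\<in>\<phi> ` ?A. \<Sum>S\<in>{S \<in> ?A. \<phi> S = y}. G (\<phi> S) d)"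
      using fA by (rule sum.image_gen)
    also have "\<dots> = (\<Sum>y\<in>\<phi> ` ?A. of_nat (card {S \<in> A. P S \<and> \<phi> S = y}) * G y d)"
    proof (rule sum.cong)
      fix y assume "y \<in> \<phi> ` ?A"
      have eqs: "{S \<in> ?A. \<phi> S = y} = {S \<in> A. P S \<and> \<phi> S = y}" by auto
      have "(\<Sum>S\<in>{S \<in> A. P S \<and> \<phi> S = y}. G (\<phi> S) d) = (\<Sum>S\<in>{S \<in> A. P S \<and> \<phi> S = y}. G y d)"
        by (rule sum.cong) auto
      then show "(\<Sum>S\<in>{S \<in> ?A. \<phi> S = y}. G (\<phi> S) d) = of_nat (card {S \<in> A. P S \<and> \<phi> S = y}) * G y d"
        unfolding eqs by simp
    qed simp
    finally show "(\<Sum>y\<in>\<phi> ` ?A. of_nat (card {S \<in> A. P S \<and> \<phi> S = y}) * G y d) = (\<Sum>S\<in>?A. G (\<phi> S) d)" by simp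
  qed
  finally show ?thesis .
qed

lemma card_fibres:
  assumes "finite D" "finite I" "\<And>x. x \<in> D \<Longrightarrow> f x \<in> I"
  shows "card D = (\<Sum>i\<in>I. card {x \<in> D. f x = i})"
proof -
  have "D = (\<Union>i\<in>I. {x \<in> D. f x = i})" using assms(3) by auto
  moreover have "card (\<Union>i\<in>I. {x \<in> D. f x = i}) = (\<Sum>i\<in>I. card {x \<in> D. f x = i})"
    using assms by (intro card_UN_disjoint) auto
  ultimately show ?thesis by simp
qed

lemma LHS_gen:
  assumes w: "w \<noteq> []"
    and Phi: "\<And>T. T \<in> Tset (length w + 1) \<Longrightarrow> \<Phi> [(T, w)] (p, q) = of_nat (card {x \<in> Dset b w p q. shape (fst x) = T})"
  shows "lin \<Phi> (iota_word w) (p, q) = of_nat (card (Dset b w p q))"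
proof -
  let ?T = "Tset (length w + 1)"
  have e: "lin \<Phi> (iota_word w) = (\<lambda>c. \<Sum>b\<in>spt (iota_word w). iota_word w b * \<Phi> b c)"
    using spt_iw_finite by (rule lin_superset) simp
  have "lin \<Phi> (iota_word w) (p, q) = (\<Sum>h\<in>spt (iota_word w). iota_word w h * \<Phi> h (p, q))"
    by (simp add: e)
  also have "\<dots> = (\<Sum>T\<in>?T. iota_word w [(T, w)] * \<Phi> [(T, w)] (p, q))"
    unfolding spt_iw by (subst sum.reindex) (auto simp: inj_on_def)
  also have "\<dots> = (\<Sum>T\<in>?T. of_nat (card {x \<in> Dset b w p q. shape (fst x) = T}))"
    by (rule sum.cong) (auto simp: Phi iota_word_def Tset_def)
  also have "\<dots> = of_nat (\<Sum>T\<in>?T. card {x \<in> Dset b w p q. shape (fst x) = T})" by simp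
  also have "(\<Sum>T\<in>?T. card {x \<in> Dset b w p q. shape (fst x) = T}) = card (Dset b w p q)"
  proof (rule card_fibres[symmetric])
    show "finite (Dset b w p q)" using D_card[OF w] by simp
    show "finite ?T" by (rule Tset_finite)
    fix x assume "x \<in> Dset b w p q"
    then obtain s c where x: "x = (s, c)" "wf s" "reading s = w" by (auto simp: Dset_def)
    then have "length (reading s) + 1 = nlv s" using wf_len by blast
    then show "shape (fst x) \<in> ?T" using x by (simp add: Tset_def wf_def leaves_shape)
  qed
  finally show ?thesis .
qed

lemma LHS_i: "w \<noteq> [] \<Longrightarrow> lin DH (iota_word w) (p, q) = of_nat (card (Dset False w p q))"
proof (rule LHS_gen)
  fix T assume T: "T \<in> Tset (length (w::'a list) + 1)"
  have "{(s, c). swf s \<and> dec s = (T, w) \<and> adm s c \<and> (tob (cutR c s), map dec (cutP c s)) = (p, q)}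
     = {x \<in> Dset False w p q. shape (fst x) = T}"
    using T by (auto simp: Dset_def dec_def wf_def Tset_def)
  then show "DH [(T, w)] (p, q) = of_nat (card {x \<in> Dset False w p q. shape (fst x) = T})"
    by (simp add: DH_single DHtree_def)
qed

lemma LHS_ii: "w \<noteq> [] \<Longrightarrow> lin DHplus1 (iota_word w) (p, q) = of_nat (card (Dset True w p q))"
proof (rule LHS_gen)
  fix T assume T: "T \<in> Tset (length (w::'a list) + 1)"
  have "{(s, c). swf s \<and> dec s = (T, w) \<and> adm s c \<and> (\<forall>p\<in>c. \<forall>q\<in>leafv s. on_right s q \<longrightarrow> \<not> prefix p q)
        \<and> (tob (cutR c s), map dec (cutP c s)) = (p, q)}
     = {x \<in> Dset True w p q. shape (fst x) = T}"
    using T by (auto simp: Dset_def dec_def wf_def Tset_def condR_def)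
  then show "DHplus1 [(T, w)] (p, q) = of_nat (card {x \<in> Dset True w p q. shape (fst x) = T})"
    by (simp add: DHplus1_def DHplustree_def)
qed

lemma RHS_i: "lin iota2 (DW w) (p, q) = (\<Sum>S\<in>Sset False w. iota (Rw S w) p * iota (Pw S w) q)"
proof -
  have "lin iota2 (DW w) = (\<lambda>d. \<Sum>S\<in>{S \<in> Pow {..<length w}. True}. iota2 (Rw S w, Pw S w) d)"
    unfolding DW_alt by (rule lin_card) simp
  moreover have "{S \<in> Pow {..<length w}. True} = Sset False w" by (auto simp: Sset_def)
  ultimately show ?thesis by (simp add: iota2_def)
qed

lemma RHS_ii: "lin iota2 (DWplus w) (p, q) = (\<Sum>S\<in>Sset True w. iota (Rw S w) p * iota (Pw S w) q)"
proof -
  have "lin iota2 (DWplus w) = (\<lambda>d. \<Sum>S\<in>{S \<in> Pow {..<length w}. length w - 1 \<in> S}. iota2 (Rw S w, Pw S w) d)"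
    unfolding DWplus_alt by (rule lin_card) simp
  moreover have "{S \<in> Pow {..<length w}. length w - 1 \<in> S} = Sset True w" by (auto simp: Sset_def)
  ultimately show ?thesis by (simp add: iota2_def)
qed

lemma core_i: "w \<noteq> [] \<Longrightarrow> lin DH (iota_word w) = lin iota2 (DW w)"
proof
  fix pq :: "'a dtree list \<times> 'a dtree list"
  assume w: "w \<noteq> []"
  obtain p q where pq: "pq = (p, q)" by (cases pq)
  show "lin DH (iota_word w) pq = lin iota2 (DW w) pq"
    unfolding pq LHS_i[OF w] RHS_i using D_card[OF w] by simp
qed

lemma core_ii: "w \<noteq> [] \<Longrightarrow> lin DHplus1 (iota_word w) = lin iota2 (DWplus w)"
proof
  fix pq :: "'a dtree list \<times> 'a dtree list"
  assume w: "w \<noteq> []"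
  obtain p q where pq: "pq = (p, q)" by (cases pq)
  show "lin DHplus1 (iota_word w) pq = lin iota2 (DWplus w) pq"
    unfolding pq LHS_ii[OF w] RHS_ii using D_card[OF w] by simp
qed


lemma vone_dlt: "vone = dlt []"
  by (rule ext) (simp add: vone_def dlt_def)

lemma tone_dlt: "tone = dlt ([], [])"
  by (rule ext) (auto simp: tone_def dlt_def split: if_splits)

lemma iota2_nil: "iota2 ([], []) = tone"
  by (rule ext) (auto simp: iota2_def iota_Nil vone_def tone_def)

lemma basis:
  "(\<forall>u\<in>set ws. u \<noteq> []) \<Longrightarrow> lin DH (iota ws) = lin iota2 (DT ws)"
proof (induction ws)
  case Nil
  have 1: "lin DH (iota []) = DH []" by (simp add: iota_Nil vone_dlt lin_dlt1)
  have 2: "DH [] = tone" by (simp add: DH_def)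
  have 3: "lin iota2 (DT []) = iota2 ([], [])" by (simp add: DT_def tone_dlt lin_dlt1)
  show ?case unfolding 1 2 3 iota2_nil ..
next
  case (Cons w ws)
  then have w: "w \<noteq> []" and ws: "\<forall>u\<in>set ws. u \<noteq> []" by auto
  have "lin DH (iota (w # ws)) = lin DH (vmult (iota_word w) (iota ws))" by (simp add: iota_Cons)
  also have "\<dots> = tmult (lin DH (iota_word w)) (lin DH (iota ws))"
  proof (rule lin_vmult[OF spt_iw_finite spt_iota])
    fix h1 h2 assume "iota_word w h1 \<noteq> 0"
    then obtain T where "h1 = [(T, w)]" by (auto simp: iota_word_def split: if_splits)
    then have "DH (h1 @ h2) = DH ((T, w) # h2)" "DH h1 = DHtree (T, w)" by (simp_all add: DH_single)
    then show "DH (h1 @ h2) = tmult (DH h1) (DH h2)" by (simp only: DH_Cons)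
  qed
  also have "\<dots> = tmult (lin iota2 (DW w)) (lin iota2 (DT ws))" using core_i[OF w] Cons.IH[OF ws] by simp
  also have "\<dots> = lin iota2 (tmult (DW w) (DT ws))"
    by (rule lin_tmult[OF spt_DW spt_DT, symmetric]) (simp add: iota2_append case_prod_beta)
  also have "\<dots> = lin iota2 (DT (w # ws))" by (simp add: DT_def)
  finally show ?case .
qed

lemma tens1_dlt: "tens1 (\<lambda>b. if b = [w] then 1 else 0) = dlt ([w], [])"
  by (rule ext) (auto simp: tens1_def vone_def dlt_def split: if_splits)

lemma spt_DWprec: "finite (spt (tens1 (\<lambda>b. if b = [w] then 1 else 0)))"
  unfolding tens1_dlt by (rule finite_subset[of _ "{([w], [])}"]) (auto simp: spt_def dlt_def split: if_splits)

theorem mainTheorem9: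
  shows "(\<forall>x :: 'a list list \<Rightarrow> complex.
            finite {b. x b \<noteq> 0} \<and> (\<forall>b. x b \<noteq> 0 \<longrightarrow> (\<forall>u\<in>set b. u \<noteq> []))
            \<longrightarrow> lin DH (lin iota x) = lin iota2 (lin DT x))
       \<and> (\<forall>w :: 'a list. w \<noteq> [] \<longrightarrow> lin iota2 (DWprec w) = DHprec (iota [w]))"
proof (intro conjI allI impI)
  fix x :: "'a list list \<Rightarrow> complex"
  assume a: "finite {b. x b \<noteq> 0} \<and> (\<forall>b. x b \<noteq> 0 \<longrightarrow> (\<forall>u\<in>set b. u \<noteq> []))"
  then have fx: "finite (spt x)" by (simp add: spt_def)
  have "lin DH (lin iota x) = lin (\<lambda>b. lin DH (iota b)) x"
    using fx spt_iota by (rule lin_lin)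
  also have "\<dots> = lin (\<lambda>b. lin iota2 (DT b)) x"
    using a basis by (intro lin_cong) blast
  also have "\<dots> = lin iota2 (lin DT x)"
    using fx spt_DT by (rule lin_lin[symmetric])
  finally show "lin DH (lin iota x) = lin iota2 (lin DT x)" .
next
  fix w :: "'a list"
  assume w: "w \<noteq> []"
  have "lin iota2 (DWprec w) = (\<lambda>d. lin iota2 (DWplus w) d - lin iota2 (tens1 (\<lambda>b. if b = [w] then 1 else 0)) d)"
    unfolding DWprec_def by (rule lin_diff[OF spt_DWplus spt_DWprec])
  also have "\<dots> = (\<lambda>d. lin DHplus1 (iota [w]) d - iota2 ([w], []) d)"
    by (simp add: core_ii[OF w] iota_single tens1_dlt lin_dlt1)
  also have "\<dots> = DHprec (iota [w])"
    by (rule ext) (auto simp: DHprec_def tens1_def iota2_def iota_Nil)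
  finally show "lin iota2 (DWprec w) = DHprec (iota [w])" .
qed


end
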